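(* Let $(A_1,\dots,A_{n-1})$ and $(B_1,\dots,B_{n-1})$ be the fundamental operator tuples of a $\Gamma_n$-contraction $(S_1,\dots,S_{n-1},P)$ and of its adjoint $(S_1^*,\dots,S_{n-1}^*,P^* )$ respectively. Then for each $i=1,\dots,n-1$, \[ (A_i^*+A_{n-i}z)\Theta_{P^*}(z)=\Theta_{P^*}(z)(B_i+B_{n-i}^*z)\quad\text{for all }z\in\mathbb D. \]
   Context: $\Gamma_n=\pi_n(\overline{\mathbb D}^n)$ with $\pi_n$ the symmetrization map. A $\Gamma_n$-contraction is a commuting tuple with Taylor joint spectrum in $\Gamma_n$ and $\|f(\cdot)\|\le\sup_{\Gamma_n}|f|$ for polynomials. $D_T=(I-T^*T)^{1/2}$, $\mathcal D_T=\overline{\operatorname{Ran}}D_T$. The fundamental operator tuple of a $\Gamma_n$-contraction $(S_1,\dots,S_{n-1},P)$ is the unique $(F_1,\dots,F_{n-1})$ in $\mathcal B(\mathcal D_P)$ with $S_i-S_{n-i}^*P=D_PF_iD_P$. The characteristic function of a contraction $T$ is $\Theta_T(z)=[-T+zD_{T^*}(I-zT^* )^{-1}D_T]|_{\mathcal D_T}:\mathcal D_T\to\mathcal D_{T^*}$, $z\in\mathbb D$; thus $\Theta_{P^*}(z):\mathcal D_{P^*}\to\mathcal D_P$. *)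

theory Defs
  imports "HOL-Analysis.Analysis"
begin

text \<open>A complex Hilbert space: a real Banach space with a compatible complex scalar
multiplication and a complex inner product (conjugate linear in the first argument)
inducing the norm.\<close>

class chilbert = banach +
  fixes scaleC :: "complex \<Rightarrow> 'a \<Rightarrow> 'a"
  fixes cinner :: "'a \<Rightarrow> 'a \<Rightarrow> complex"
  assumes scaleC_add_right: "scaleC a (x + y) = scaleC a x + scaleC a y"
    and scaleC_add_left: "scaleC (a + b) x = scaleC a x + scaleC b x"
    and scaleC_scaleC: "scaleC a (scaleC b x) = scaleC (a * b) x"
    and scaleC_one: "scaleC 1 x = x"
    and scaleR_scaleC: "scaleR r x = scaleC (complex_of_real r) x"
    and cinner_commute: "cinner x y = cnj (cinner y x)"
    and cinner_add_left: "cinner (x + y) z = cinner x z + cinner y z"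
    and cinner_scaleC_left: "cinner (scaleC a x) y = cnj a * cinner x y"
    and norm_cinner: "complex_of_real ((norm x)\<^sup>2) = cinner x x"

definition bop :: "('a::chilbert \<Rightarrow> 'a) \<Rightarrow> bool" where
  "bop T \<longleftrightarrow> bounded_linear T \<and> (\<forall>a x. T (scaleC a x) = scaleC a (T x))"

definition adj :: "('a::chilbert \<Rightarrow> 'a) \<Rightarrow> ('a \<Rightarrow> 'a)" where
  "adj T = (THE S. \<forall>x y. cinner (T x) y = cinner x (S y))"

definition positive_op :: "('a::chilbert \<Rightarrow> 'a) \<Rightarrow> bool" where
  "positive_op S \<longleftrightarrow> bop S \<and> (\<forall>x. Im (cinner (S x) x) = 0 \<and> Re (cinner (S x) x) \<ge> 0)"

definition op_sqrt :: "('a::chilbert \<Rightarrow> 'a) \<Rightarrow> ('a \<Rightarrow> 'a)" where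
  "op_sqrt A = (THE S. positive_op S \<and> S \<circ> S = A)"

definition op_inv :: "('a::chilbert \<Rightarrow> 'a) \<Rightarrow> ('a \<Rightarrow> 'a)" where
  "op_inv T = (THE S. bop S \<and> S \<circ> T = id \<and> T \<circ> S = id)"

definition defect :: "('a::chilbert \<Rightarrow> 'a) \<Rightarrow> ('a \<Rightarrow> 'a)" where
  "defect T = op_sqrt (\<lambda>x. x - adj T (T x))"

definition defect_space :: "('a::chilbert \<Rightarrow> 'a) \<Rightarrow> 'a set" where
  "defect_space T = closure (range (defect T))"

text \<open>B(M) for a closed subspace M, realised inside B(H) as the operators that map M
into M and vanish on the orthogonal complement of M.  On such operators the Hilbert
space adjoint in H coincides with the adjoint in B(M).\<close>
definition ops_on :: "'a::chilbert set \<Rightarrow> ('a \<Rightarrow> 'a) set" where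
  "ops_on M = {F. bop F \<and> F ` M \<subseteq> M \<and> (\<forall>x. (\<forall>m\<in>M. cinner m x = 0) \<longrightarrow> F x = 0)}"

text \<open>Characteristic function
  Theta_T(z) = -T + z D_{T^*} (I - z T^*)^{-1} D_T, meaningful on the defect space of T.\<close>
definition char_fn :: "('a::chilbert \<Rightarrow> 'a) \<Rightarrow> complex \<Rightarrow> 'a \<Rightarrow> 'a" where
  "char_fn T z x = - T x + scaleC z (defect (adj T) (op_inv (\<lambda>y. y - scaleC z (adj T y)) (defect T x)))"

definition esym :: "nat \<Rightarrow> nat \<Rightarrow> (nat \<Rightarrow> complex) \<Rightarrow> complex" where
  "esym n k z = (\<Sum>K\<in>{K. K \<subseteq> {1..n} \<and> card K = k}. \<Prod>j\<in>K. z j)"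

text \<open>Gamma_n = pi_n(closed polydisc), points encoded as v with v 1..v (n-1) = s_1..s_(n-1),
v n = p, and v j = 0 for all other j.\<close>
definition gamma_set :: "nat \<Rightarrow> (nat \<Rightarrow> complex) set" where
  "gamma_set n = {v. \<exists>z. (\<forall>j\<in>{1..n}. cmod (z j) \<le> 1)
      \<and> (\<forall>i\<in>{1..n-1}. v i = esym n i z) \<and> v n = (\<Prod>j\<in>{1..n}. z j)
      \<and> (\<forall>j. j \<notin> {1..n} \<longrightarrow> v j = 0)}"

datatype cpoly = PConst complex | PVar nat | PAdd cpoly cpoly | PMul cpoly cpoly

fun pvars :: "cpoly \<Rightarrow> nat set" where
  "pvars (PConst c) = {}"
| "pvars (PVar i) = {i}"
| "pvars (PAdd p q) = pvars p \<union> pvars q"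
| "pvars (PMul p q) = pvars p \<union> pvars q"

fun peval :: "(nat \<Rightarrow> complex) \<Rightarrow> cpoly \<Rightarrow> complex" where
  "peval v (PConst c) = c"
| "peval v (PVar i) = v i"
| "peval v (PAdd p q) = peval v p + peval v q"
| "peval v (PMul p q) = peval v p * peval v q"

fun opeval :: "(nat \<Rightarrow> 'a::chilbert \<Rightarrow> 'a) \<Rightarrow> cpoly \<Rightarrow> 'a \<Rightarrow> 'a" where
  "opeval V (PConst c) = (\<lambda>x. scaleC c x)"
| "opeval V (PVar i) = V i"
| "opeval V (PAdd p q) = (\<lambda>x. opeval V p x + opeval V q x)"
| "opeval V (PMul p q) = opeval V p \<circ> opeval V q"

definition gtuple :: "nat \<Rightarrow> (nat \<Rightarrow> 'a \<Rightarrow> 'a) \<Rightarrow> ('a \<Rightarrow> 'a) \<Rightarrow> nat \<Rightarrow> 'a \<Rightarrow> 'a" where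
  "gtuple n S P = (\<lambda>i. if i = n then P else S i)"

text \<open>Gamma_n-contraction: commuting tuple of bounded operators with Gamma_n a spectral
set.  The Taylor-spectrum condition is implied by the polynomial inequality because
Gamma_n is polynomially convex.\<close>
definition gamma_contraction :: "nat \<Rightarrow> (nat \<Rightarrow> 'a::chilbert \<Rightarrow> 'a) \<Rightarrow> ('a \<Rightarrow> 'a) \<Rightarrow> bool" where
  "gamma_contraction n S P \<longleftrightarrow>
     (\<forall>i\<in>{1..n}. bop (gtuple n S P i))
   \<and> (\<forall>i\<in>{1..n}. \<forall>j\<in>{1..n}. gtuple n S P i \<circ> gtuple n S P j = gtuple n S P j \<circ> gtuple n S P i)
   \<and> (\<forall>f. pvars f \<subseteq> {1..n} \<longrightarrow>
        onorm (opeval (gtuple n S P) f) \<le> (SUP v\<in>gamma_set n. cmod (peval v f)))"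

definition fundamental_tuple :: "nat \<Rightarrow> (nat \<Rightarrow> 'a::chilbert \<Rightarrow> 'a) \<Rightarrow> ('a \<Rightarrow> 'a) \<Rightarrow> (nat \<Rightarrow> 'a \<Rightarrow> 'a) \<Rightarrow> bool" where
  "fundamental_tuple n S P F \<longleftrightarrow>
     (\<forall>i\<in>{1..n-1}. F i \<in> ops_on (defect_space P)
        \<and> (\<lambda>x. S i x - adj (S (n - i)) (P x)) = defect P \<circ> F i \<circ> defect P)"

end

theory Submission
  imports Defs
begin


lemma scaleC_zero_left [simp]: "scaleC 0 x = (0::'a::chilbert)"
proof -
  have "scaleC (0+0) x = scaleC 0 x + scaleC 0 x" by (rule scaleC_add_left)
  then show ?thesis by simp
qed

lemma scaleC_zero_right [simp]: "scaleC a (0::'a::chilbert) = 0"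
proof -
  have "scaleC a (0+0) = scaleC a 0 + scaleC a (0::'a)" by (rule scaleC_add_right)
  then show ?thesis by simp
qed

lemma scaleC_minus_right: "scaleC a (- x) = - scaleC a (x::'a::chilbert)"
proof -
  have "scaleC a (x + - x) = scaleC a x + scaleC a (- x)" by (rule scaleC_add_right)
  then show ?thesis by (simp add: eq_neg_iff_add_eq_0 add.commute)
qed

lemma scaleC_diff_right: "scaleC a (x - y) = scaleC a x - scaleC a (y::'a::chilbert)"
  by (simp only: diff_conv_add_uminus scaleC_add_right scaleC_minus_right)

lemma scaleC_minus_left: "scaleC (- a) x = - scaleC a (x::'a::chilbert)"
proof -
  have "scaleC (a + - a) x = scaleC a x + scaleC (- a) x" by (rule scaleC_add_left)
  then show ?thesis by (simp add: eq_neg_iff_add_eq_0 add.commute)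
qed

lemma scaleC_diff_left: "scaleC (a - b) x = scaleC a x - scaleC b (x::'a::chilbert)"
  by (simp only: diff_conv_add_uminus scaleC_add_left scaleC_minus_left)

lemma scaleC_of_real: "scaleC (complex_of_real r) x = scaleR r (x::'a::chilbert)"
  by (simp add: scaleR_scaleC)

lemma scaleC_sum_right: "scaleC a (sum f A) = (\<Sum>i\<in>A. scaleC a (f i::'a::chilbert))"
  by (induction A rule: infinite_finite_induct) (auto simp: scaleC_add_right)

lemma cinner_add_right: "cinner x (y + z) = cinner x y + cinner x (z::'a::chilbert)"
proof -
  have "cinner x (y + z) = cnj (cinner (y + z) x)" by (rule cinner_commute)
  then show ?thesis by (simp add: cinner_add_left cinner_commute[of x y] cinner_commute[of x z])
qed

lemma cinner_scaleC_right: "cinner x (scaleC a y) = a * cinner x (y::'a::chilbert)"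
proof -
  have "cinner x (scaleC a y) = cnj (cinner (scaleC a y) x)" by (rule cinner_commute)
  then show ?thesis by (simp add: cinner_scaleC_left cinner_commute[of x y])
qed

lemma cinner_zero_left [simp]: "cinner 0 (x::'a::chilbert) = 0"
proof -
  have "cinner (0+0) x = cinner 0 x + cinner 0 x" by (rule cinner_add_left)
  then show ?thesis by simp
qed

lemma cinner_zero_right [simp]: "cinner x (0::'a::chilbert) = 0"
proof -
  have "cinner x (0+0) = cinner x 0 + cinner x 0" by (rule cinner_add_right)
  then show ?thesis by simp
qed

lemma cinner_minus_left: "cinner (- x) y = - cinner x (y::'a::chilbert)"
proof -
  have "cinner (x + - x) y = cinner x y + cinner (- x) y" by (rule cinner_add_left)
  then show ?thesis by (simp add: eq_neg_iff_add_eq_0 add.commute)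
qed

lemma cinner_minus_right: "cinner x (- y) = - cinner x (y::'a::chilbert)"
proof -
  have "cinner x (y + - y) = cinner x y + cinner x (- y)" by (rule cinner_add_right)
  then show ?thesis by (simp add: eq_neg_iff_add_eq_0 add.commute)
qed

lemma cinner_diff_left: "cinner (x - y) z = cinner x z - cinner y (z::'a::chilbert)"
  by (simp only: diff_conv_add_uminus cinner_add_left cinner_minus_left)

lemma cinner_diff_right: "cinner x (y - z) = cinner x y - cinner x (z::'a::chilbert)"
  by (simp only: diff_conv_add_uminus cinner_add_right cinner_minus_right)

lemma cinner_scaleR_left: "cinner (scaleR r x) y = of_real r * cinner x (y::'a::chilbert)"
  by (simp add: scaleR_scaleC cinner_scaleC_left)

lemma cinner_scaleR_right: "cinner x (scaleR r y) = of_real r * cinner x (y::'a::chilbert)"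
  by (simp add: scaleR_scaleC cinner_scaleC_right)

lemma cinner_sum_left: "cinner (sum f A) (y::'a::chilbert) = (\<Sum>i\<in>A. cinner (f i) y)"
  by (induction A rule: infinite_finite_induct) (auto simp: cinner_add_left)

lemma cinner_self: "cinner x (x::'a::chilbert) = complex_of_real ((norm x)\<^sup>2)"
  by (rule norm_cinner[symmetric])

lemma Re_cinner_self: "Re (cinner x (x::'a::chilbert)) = (norm x)\<^sup>2"
  by (simp add: cinner_self)

lemma Im_cinner_self: "Im (cinner x (x::'a::chilbert)) = 0"
  by (simp add: cinner_self)

lemma cinner_self_eq_0: "cinner x x = 0 \<longleftrightarrow> (x::'a::chilbert) = 0"
  by (simp add: cinner_self)

lemma norm_scaleC: "norm (scaleC a x) = cmod a * norm (x::'a::chilbert)"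
proof -
  have "complex_of_real ((norm (scaleC a x))\<^sup>2) = cinner (scaleC a x) (scaleC a x)"
    by (rule norm_cinner)
  also have "\<dots> = cnj a * a * cinner x x"
    by (simp add: cinner_scaleC_left cinner_scaleC_right)
  also have "\<dots> = complex_of_real ((cmod a * norm x)\<^sup>2)"
    by (simp add: cinner_self power_mult_distrib mult.commute[of "cnj a"] complex_norm_square[symmetric])
  finally have "(norm (scaleC a x))\<^sup>2 = (cmod a * norm x)\<^sup>2"
    using of_real_eq_iff by blast
  then show ?thesis
    by (simp add: power2_eq_iff_nonneg)
qed

lemma norm_add_sq: "(norm (x + y))\<^sup>2 = (norm x)\<^sup>2 + (norm y)\<^sup>2 + 2 * Re (cinner x (y::'a::chilbert))"
proof -
  have "(norm (x + y))\<^sup>2 = Re (cinner (x+y) (x+y))" by (simp add: Re_cinner_self)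
  also have "\<dots> = Re (cinner x x) + Re (cinner y y) + Re (cinner x y) + Re (cinner y x)"
    by (simp add: cinner_add_left cinner_add_right)
  also have "Re (cinner y x) = Re (cinner x y)"
    by (subst cinner_commute) simp
  finally show ?thesis by (simp add: Re_cinner_self)
qed

lemma norm_diff_sq: "(norm (x - y))\<^sup>2 = (norm x)\<^sup>2 + (norm y)\<^sup>2 - 2 * Re (cinner x (y::'a::chilbert))"
  using norm_add_sq[of x "-y"] by (simp add: cinner_minus_right)

lemma Re_cinner_le: "Re (cinner x y) \<le> norm x * norm (y::'a::chilbert)"
proof -
  have "(norm (x + y))\<^sup>2 \<le> (norm x + norm y)\<^sup>2"
    by (simp add: power_mono norm_triangle_ineq)
  then show ?thesis by (simp add: norm_add_sq power2_sum)
qed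

lemma cinner_Cauchy_Schwarz: "cmod (cinner x y) \<le> norm x * norm (y::'a::chilbert)"
proof -
  define a where "a = sgn (cinner x y)"
  have "cnj a * cinner x y = complex_of_real (cmod (cinner x y))"
  proof (cases "cinner x y = 0")
    case False
    have "cnj a * cinner x y = complex_of_real (inverse (cmod (cinner x y))) * (cinner x y * cnj (cinner x y))"
      unfolding a_def sgn_div_norm scaleR_conv_of_real by (simp add: mult.commute mult.left_commute)
    also have "\<dots> = complex_of_real (inverse (cmod (cinner x y)) * (cmod (cinner x y))\<^sup>2)"
      by (simp only: complex_norm_square[symmetric] of_real_mult)
    also have "inverse (cmod (cinner x y)) * (cmod (cinner x y))\<^sup>2 = cmod (cinner x y)"
      using False by (simp add: power2_eq_square)
    finally show ?thesis .
  qed (simp add: a_def)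
  then have "cmod (cinner x y) = Re (cinner (scaleC a x) y)"
    by (simp add: cinner_scaleC_left)
  also have "\<dots> \<le> norm (scaleC a x) * norm y" by (rule Re_cinner_le)
  also have "\<dots> \<le> norm x * norm y"
    unfolding norm_scaleC a_def
    by (auto intro!: mult_right_mono simp: norm_sgn)
  finally show ?thesis .
qed



lemma bl_add: "bounded_linear f \<Longrightarrow> f (x + y) = f x + f y"
  by (simp add: linear_add bounded_linear.linear)
lemma bl_diff: "bounded_linear f \<Longrightarrow> f (x - y) = f x - f y"
  by (simp add: linear_diff bounded_linear.linear)
lemma bl_scaleR: "bounded_linear f \<Longrightarrow> f (scaleR r x) = scaleR r (f x)"
  by (simp add: linear_scale bounded_linear.linear)
lemma bl_zero: "bounded_linear f \<Longrightarrow> f 0 = 0"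
  by (simp add: linear_0 bounded_linear.linear)
lemma bl_minus: "bounded_linear f \<Longrightarrow> f (- x) = - f x"
  by (simp add: linear_neg bounded_linear.linear)

lemma bop_bl: "bop T \<Longrightarrow> bounded_linear T"
  by (simp add: bop_def)
lemma bop_scaleC: "bop T \<Longrightarrow> T (scaleC a x) = scaleC a (T x)"
  by (simp add: bop_def)

lemma bounded_linear_scaleC: "bounded_linear (scaleC a :: 'a::chilbert \<Rightarrow> 'a)"
proof (rule bounded_linear_intro[where K="cmod a"])
  fix x y :: 'a show "scaleC a (x + y) = scaleC a x + scaleC a y" by (rule scaleC_add_right)
next
  fix r and x :: 'a
  show "scaleC a (scaleR r x) = scaleR r (scaleC a x)"
    by (simp add: scaleR_scaleC scaleC_scaleC mult.commute)
next
  fix x :: 'a show "norm (scaleC a x) \<le> norm x * cmod a" by (simp add: norm_scaleC mult.commute)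
qed

lemma bounded_bilinear_cinner: "bounded_bilinear (cinner :: 'a::chilbert \<Rightarrow> 'a \<Rightarrow> complex)"
proof
  fix a a' b b' :: 'a and r :: real
  show "cinner (a + a') b = cinner a b + cinner a' b" by (rule cinner_add_left)
  show "cinner a (b + b') = cinner a b + cinner a b'" by (rule cinner_add_right)
  show "cinner (scaleR r a) b = scaleR r (cinner a b)" by (simp add: cinner_scaleR_left scaleR_conv_of_real)
  show "cinner a (scaleR r b) = scaleR r (cinner a b)" by (simp add: cinner_scaleR_right scaleR_conv_of_real)
  show "\<exists>K. \<forall>a b::'a. norm (cinner a b) \<le> norm a * norm b * K"
    by (rule exI[of _ 1]) (simp add: cinner_Cauchy_Schwarz)
qed

lemma bop_id: "bop (\<lambda>x::'a::chilbert. x)"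
  by (simp add: bop_def)

lemma bop_comp: "bop S \<Longrightarrow> bop T \<Longrightarrow> bop (\<lambda>x. S (T x))"
  unfolding bop_def by (auto intro: bounded_linear_compose)

lemma bop_comp': "bop S \<Longrightarrow> bop T \<Longrightarrow> bop (S \<circ> T)"
  using bop_comp[of S T] by (simp add: comp_def)

lemma bop_add: "bop S \<Longrightarrow> bop T \<Longrightarrow> bop (\<lambda>x. S x + T x)"
  unfolding bop_def by (auto intro: bounded_linear_add simp: scaleC_add_right)

lemma bop_diff: "bop S \<Longrightarrow> bop T \<Longrightarrow> bop (\<lambda>x. S x - T x)"
  unfolding bop_def by (auto intro: bounded_linear_sub simp: scaleC_diff_right)

lemma bop_minus: "bop S \<Longrightarrow> bop (\<lambda>x. - S x)"
  unfolding bop_def by (auto intro: bounded_linear_minus simp: scaleC_minus_right)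

lemma bop_scaleC_op: "bop S \<Longrightarrow> bop (\<lambda>x. scaleC c (S x))"
  unfolding bop_def
  by (auto intro: bounded_linear_compose[OF bounded_linear_scaleC] simp: scaleC_scaleC mult.commute)

lemma cinner_ext_right: "(\<And>y. cinner y x = cinner y x') \<Longrightarrow> x = (x'::'a::chilbert)"
proof -
  assume h: "\<And>y. cinner y x = cinner y x'"
  have "cinner (x - x') (x - x') = 0" by (simp add: cinner_diff_right h)
  then show ?thesis by (simp add: cinner_self_eq_0)
qed

lemma cinner_ext_left: "(\<And>y. cinner x y = cinner x' y) \<Longrightarrow> x = (x'::'a::chilbert)"
proof -
  assume h: "\<And>y. cinner x y = cinner x' y"
  have "cinner (x - x') (x - x') = 0" by (simp add: cinner_diff_left h)
  then show ?thesis by (simp add: cinner_self_eq_0)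
qed

subsection \<open>Riesz representation\<close>

lemma riesz_real:
  fixes h :: "'a::chilbert \<Rightarrow> real"
  assumes lin: "bounded_linear h"
  shows "\<exists>w. \<forall>y. h y = Re (cinner y w)"
proof -
  obtain K where K: "\<And>x. norm (h x) \<le> norm x * K" and K0: "K \<ge> 0"
    using bounded_linear.nonneg_bounded[OF lin] by blast
  define B where "B = {x::'a. norm x \<le> 1}"
  define M where "M = Sup (h ` B)"
  have ne: "h ` B \<noteq> {}" unfolding B_def by (auto intro!: exI[of _ 0])
  have bdd: "bdd_above (h ` B)"
  proof (rule bdd_aboveI[of _ "\<bar>K\<bar>"])
    fix r assume "r \<in> h ` B"
    then obtain x where x: "norm x \<le> 1" "r = h x" unfolding B_def by auto
    have "r \<le> norm (h x)" using x by simp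
    also have "\<dots> \<le> norm x * K" by (rule K)
    also have "\<dots> \<le> 1 * \<bar>K\<bar>" using x K0 by (intro mult_mono) auto
    finally show "r \<le> \<bar>K\<bar>" by simp
  qed
  have hM: "h x \<le> M" if "norm x \<le> 1" for x
    unfolding M_def using that bdd by (intro cSup_upper) (auto simp: B_def)
  have M0: "0 \<le> M" using hM[of 0] bl_zero[OF lin] by simp
  have hMn: "h x \<le> M * norm x" for x
  proof (cases "x = 0")
    case True then show ?thesis using bl_zero[OF lin] by simp
  next
    case False
    then have n: "norm x > 0" by simp
    have "h (scaleR (1 / norm x) x) \<le> M" by (rule hM) (use n in simp)
    then have "h x / norm x \<le> M" by (simp add: bl_scaleR[OF lin])
    then show ?thesis using n by (simp add: divide_le_eq mult.commute)
  qed
  show ?thesis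
  proof (cases "M = 0")
    case True
    have "h y = 0" for y
    proof -
      have "h y \<le> 0" using hMn[of y] True by simp
      moreover have "h (- y) \<le> 0" using hMn[of "-y"] True by simp
      ultimately show ?thesis by (simp add: bl_minus[OF lin])
    qed
    then show ?thesis by (intro exI[of _ 0]) simp
  next
    case False
    then have Mpos: "M > 0" using M0 by simp
    have approx: "\<exists>x. norm x \<le> 1 \<and> M - e < h x" if "e > 0" for e
    proof -
      have "M - e < Sup (h ` B)" using that M_def by simp
      then obtain r where "r \<in> h ` B" "M - e < r"
        using less_cSup_iff[OF ne bdd] by blast
      then show ?thesis unfolding B_def by auto
    qed
    have "\<forall>k. \<exists>x. norm x \<le> 1 \<and> M - inverse (real (Suc k)) < h x"
      using approx by simp
    then obtain xs where xs: "\<And>k. norm (xs k) \<le> 1" "\<And>k. M - inverse (real (Suc k)) < h (xs k)"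
      by metis
    have est: "(norm (xs m - xs n))\<^sup>2 \<le> 4 * ((inverse (real (Suc m)) + inverse (real (Suc n))) / M)" for m n
    proof -
      define a where "a = xs m"
      define b where "b = xs n"
      define d where "d = (inverse (real (Suc m)) + inverse (real (Suc n))) / M"
      have d0: "d \<ge> 0" unfolding d_def using Mpos by simp
      have "h (a + b) = h a + h b" by (rule bl_add[OF lin])
      also have "\<dots> > 2 * M - M * d"
      proof -
        have Md: "M * d = inverse (real (Suc m)) + inverse (real (Suc n))" unfolding d_def using Mpos by simp
        show ?thesis using xs(2)[of m] xs(2)[of n] unfolding a_def b_def Md by linarith
      qed
      finally have "2 * M - M * d < M * norm (a + b)" using hMn[of "a+b"] by simp
      then have s: "2 - d < norm (a + b)" using Mpos
        by (metis mult.commute mult_less_cancel_left_pos right_diff_distrib' mult_2_right distrib_left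
            mult.right_neutral) 
      have par: "(norm (a - b))\<^sup>2 + (norm (a + b))\<^sup>2 \<le> 4"
      proof -
        have "(norm (a - b))\<^sup>2 + (norm (a + b))\<^sup>2 = 2 * (norm a)\<^sup>2 + 2 * (norm b)\<^sup>2"
          by (simp add: norm_add_sq norm_diff_sq)
        also have "\<dots> \<le> 2 * 1 + 2 * 1"
          using xs(1)[of m] xs(1)[of n] unfolding a_def b_def
          by (intro add_mono mult_left_mono) (auto simp: power_le_one)
        finally show ?thesis by simp
      qed
      show ?thesis
      proof (cases "d \<le> 2")
        case True
        then have "(2 - d)\<^sup>2 \<le> (norm (a + b))\<^sup>2" using s by (intro power_mono) auto
        then have "(norm (a - b))\<^sup>2 \<le> 4 - (2 - d)\<^sup>2" using par by simp
        also have "\<dots> \<le> 4 * d" using d0 by (simp add: power2_eq_square algebra_simps)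
        finally show ?thesis unfolding a_def b_def d_def .
      next
        case False
        then have "(norm (a - b))\<^sup>2 \<le> 4 * d" using par zero_le_power2[of "norm (a + b)"] by linarith
        then show ?thesis unfolding a_def b_def d_def .
      qed
    qed
    have "Cauchy xs"
    proof (rule metric_CauchyI)
      fix e :: real assume e: "e > 0"
      obtain N :: nat where N: "real N > 8 / (M * e\<^sup>2)" using reals_Archimedean2 by blast
      have "dist (xs m) (xs n) < e" if "m \<ge> N" "n \<ge> N" for m n
      proof -
        have i1: "inverse (real (Suc m)) \<le> inverse (real (Suc N))" using that by (simp add: field_simps)
        have i2: "inverse (real (Suc n)) \<le> inverse (real (Suc N))" using that by (simp add: field_simps)
        have "(dist (xs m) (xs n))\<^sup>2 \<le> 4 * ((inverse (real (Suc m)) + inverse (real (Suc n))) / M)"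
          using est by (simp add: dist_norm)
        also have "\<dots> \<le> 4 * ((2 * inverse (real (Suc N))) / M)"
        proof -
          have "inverse (real (Suc m)) + inverse (real (Suc n)) \<le> 2 * inverse (real (Suc N))"
            using i1 i2 by linarith
          then show ?thesis using Mpos by (intro mult_left_mono divide_right_mono) auto
        qed
        also have "\<dots> = 8 / (M * real (Suc N))" by (simp add: field_simps)
        also have "\<dots> < e\<^sup>2"
        proof -
          have p: "M * real (Suc N) > 0" using Mpos by simp
          have "8 / (M * e\<^sup>2) < real (Suc N)" using N by simp
          then have "8 < real (Suc N) * (M * e\<^sup>2)" using Mpos e by (simp add: pos_divide_less_eq)
          then have "8 < e\<^sup>2 * (M * real (Suc N))" by (simp only: ac_simps)
          then show ?thesis by (simp only: pos_divide_less_eq[OF p])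
        qed
        finally have "(dist (xs m) (xs n))\<^sup>2 < e\<^sup>2" .
        then show ?thesis using e by (simp add: power_less_imp_less_base)
      qed
      then show "\<exists>N. \<forall>m\<ge>N. \<forall>n\<ge>N. dist (xs m) (xs n) < e" by blast
    qed
    then obtain x0 where x0: "xs \<longlonglongrightarrow> x0"
      using Cauchy_convergent_iff convergent_def by blast
    have nx0: "norm x0 \<le> 1"
      by (rule LIMSEQ_le_const2[OF tendsto_norm[OF x0]]) (use xs(1) in auto)
    have "(\<lambda>k. h (xs k) + inverse (real (Suc k))) \<longlonglongrightarrow> h x0 + 0"
      by (intro tendsto_add bounded_linear.tendsto[OF lin] x0 LIMSEQ_inverse_real_of_nat)
    then have "(\<lambda>k. h (xs k) + inverse (real (Suc k))) \<longlonglongrightarrow> h x0" by simp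
    moreover have "\<exists>N. \<forall>k\<ge>N. M \<le> h (xs k) + inverse (real (Suc k))"
      using xs(2) by (intro exI[of _ 0]) (auto simp: algebra_simps less_imp_le)
    ultimately have "M \<le> h x0" by (rule LIMSEQ_le_const)
    then have hx0: "h x0 = M" and nx1: "norm x0 = 1"
      using hMn[of x0] hM[OF nx0] nx0 Mpos by (auto simp: mult_le_cancel_left1)
    have var: "h y = M * Re (cinner y x0)" for y
    proof -
      define a where "a = h y"
      define b where "b = Re (cinner x0 y)"
      define Y where "Y = (norm y)\<^sup>2"
      define c where "c = a - M * b"
      have key: "2 * t * M * c \<le> t\<^sup>2 * (M\<^sup>2 * Y)" if t: "\<bar>t\<bar> * \<bar>a\<bar> \<le> M" for t
      proof -
        have e1: "h (x0 + scaleR t y) = M + t * a"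
          by (simp add: bl_add[OF lin] bl_scaleR[OF lin] hx0 a_def)
        have e2: "(norm (x0 + scaleR t y))\<^sup>2 = 1 + 2 * t * b + t\<^sup>2 * Y"
          by (simp add: norm_add_sq nx1 cinner_scaleR_right b_def Y_def power_mult_distrib)
        have ge: "0 \<le> M + t * a"
        proof -
          have "- (t * a) \<le> \<bar>t\<bar> * \<bar>a\<bar>" by (simp add: abs_mult[symmetric])
          then show ?thesis using t by simp
        qed
        have "M + t * a \<le> M * norm (x0 + scaleR t y)" using hMn e1 by metis
        then have "(M + t * a)\<^sup>2 \<le> (M * norm (x0 + scaleR t y))\<^sup>2"
          using ge by (intro power_mono) auto
        also have "\<dots> = M\<^sup>2 * (1 + 2 * t * b + t\<^sup>2 * Y)" by (simp add: power_mult_distrib e2)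
        finally have "(M + t * a)\<^sup>2 \<le> M\<^sup>2 * (1 + 2 * t * b + t\<^sup>2 * Y)" .
        then have "2 * t * M * (a - M * b) \<le> t\<^sup>2 * (M\<^sup>2 * Y) - t\<^sup>2 * a\<^sup>2"
          by (simp add: power2_eq_square algebra_simps)
        also have "\<dots> \<le> t\<^sup>2 * (M\<^sup>2 * Y)" by simp
        finally show ?thesis unfolding c_def .
      qed
      have "c = 0"
      proof (rule ccontr)
        assume c0: "c \<noteq> 0"
        define s where "s = min (M / (\<bar>a\<bar> + 1)) (\<bar>c\<bar> / (M * Y + 1))"
        have Y0: "Y \<ge> 0" unfolding Y_def by simp
        have MY: "M * Y + 1 > 0" using Mpos Y0 by (simp add: add_nonneg_pos)
        have s0: "s > 0" unfolding s_def using Mpos c0 MY by (simp add: add_pos_nonneg)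
        have s1: "s * \<bar>a\<bar> \<le> M"
        proof -
          have "s \<le> M / (\<bar>a\<bar> + 1)" unfolding s_def by simp
          then have "s * (\<bar>a\<bar> + 1) \<le> M" by (simp add: le_divide_eq add_pos_nonneg)
          then show ?thesis using s0 by (simp add: algebra_simps)
        qed
        have s2: "s * (M * Y + 1) \<le> \<bar>c\<bar>"
        proof -
          have "s \<le> \<bar>c\<bar> / (M * Y + 1)" unfolding s_def by simp
          then show ?thesis using MY by (simp add: le_divide_eq)
        qed
        define t where "t = (if c > 0 then s else - s)"
        have "\<bar>t\<bar> * \<bar>a\<bar> \<le> M" using s1 s0 unfolding t_def by auto
        from key[OF this] have k: "2 * t * M * c \<le> t\<^sup>2 * (M\<^sup>2 * Y)" .
        have tc: "t * c = s * \<bar>c\<bar>" unfolding t_def by auto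
        have tt: "t\<^sup>2 = s\<^sup>2" unfolding t_def by auto
        have "2 * s * M * \<bar>c\<bar> = 2 * M * (t * c)" using tc by (simp add: algebra_simps)
        also have "\<dots> = 2 * t * M * c" by (simp add: algebra_simps)
        also have "\<dots> \<le> t\<^sup>2 * (M\<^sup>2 * Y)" by (rule k)
        also have "\<dots> = s\<^sup>2 * (M\<^sup>2 * Y)" by (simp only: tt)
        finally have "2 * s * M * \<bar>c\<bar> \<le> s\<^sup>2 * (M\<^sup>2 * Y)" .
        then have "2 * \<bar>c\<bar> \<le> s * (M * Y)" using s0 Mpos
          by (simp add: power2_eq_square algebra_simps)
        moreover have "s * (M * Y) \<le> \<bar>c\<bar>" using s2 s0 by (simp add: algebra_simps)
        ultimately show False using c0 by simp
      qed
      moreover have "Re (cinner y x0) = b"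
        unfolding b_def by (subst cinner_commute) simp
      ultimately show ?thesis unfolding c_def a_def by simp
    qed
    show ?thesis
      by (rule exI[of _ "scaleR M x0"]) (simp add: var cinner_scaleR_right)
  qed
qed

lemma riesz:
  fixes g :: "'a::chilbert \<Rightarrow> complex"
  assumes add: "\<And>x y. g (x + y) = g x + g y"
    and sc: "\<And>a x. g (scaleC a x) = cnj a * g x"
    and bd: "\<And>x. cmod (g x) \<le> norm x * K"
  shows "\<exists>w. \<forall>x. g x = cinner x w"
proof -
  have "bounded_linear (\<lambda>x. Re (g x))"
  proof (rule bounded_linear_intro[where K=K])
    fix x y show "Re (g (x + y)) = Re (g x) + Re (g y)" by (simp add: add)
  next
    fix r x show "Re (g (scaleR r x)) = scaleR r (Re (g x))"
      by (simp add: scaleR_scaleC sc)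
  next
    fix x show "norm (Re (g x)) \<le> norm x * K"
      using abs_Re_le_cmod[of "g x"] bd[of x] by simp
  qed
  then obtain w where w: "\<And>y. Re (g y) = Re (cinner y w)" using riesz_real by blast
  have "g x = cinner x w" for x
  proof (rule complex_eqI)
    show "Re (g x) = Re (cinner x w)" by (rule w)
    have "Re (g (scaleC \<i> x)) = Re (cinner (scaleC \<i> x) w)" by (rule w)
    then show "Im (g x) = Im (cinner x w)" by (simp add: sc cinner_scaleC_left)
  qed
  then show ?thesis by blast
qed

lemma adj_exists:
  assumes "bop T"
  shows "\<exists>S. \<forall>x y. cinner (T x) y = cinner x (S y)"
proof -
  obtain K where K: "\<And>x. norm (T x) \<le> norm x * K"
    using bounded_linear.bounded[OF bop_bl[OF assms]] by blast
  have "\<exists>w. \<forall>x. cinner (T x) y = cinner x w" for y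
  proof (rule riesz[where K="K * norm y"])
    fix x1 x2 show "cinner (T (x1 + x2)) y = cinner (T x1) y + cinner (T x2) y"
      by (simp add: bl_add[OF bop_bl[OF assms]] cinner_add_left)
  next
    fix a x show "cinner (T (scaleC a x)) y = cnj a * cinner (T x) y"
      by (simp add: bop_scaleC[OF assms] cinner_scaleC_left)
  next
    fix x
    have "cmod (cinner (T x) y) \<le> norm (T x) * norm y" by (rule cinner_Cauchy_Schwarz)
    also have "\<dots> \<le> norm x * K * norm y" using K[of x] by (intro mult_right_mono) auto
    finally show "cmod (cinner (T x) y) \<le> norm x * (K * norm y)" by (simp add: mult.assoc)
  qed
  then show ?thesis by metis
qed

lemma adj_char:
  assumes "bop T"
  shows "cinner (T x) y = cinner x (adj T y)"
proof -
  obtain S where S: "\<forall>x y. cinner (T x) y = cinner x (S y)" using adj_exists[OF assms] by blast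
  have "adj T = S"
    unfolding adj_def
  proof (rule the_equality)
    show "\<forall>x y. cinner (T x) y = cinner x (S y)" by (rule S)
    fix S' assume S': "\<forall>x y. cinner (T x) y = cinner x (S' y)"
    show "S' = S"
    proof
      fix y show "S' y = S y" by (rule cinner_ext_right) (metis S S')
    qed
  qed
  then show ?thesis using S by simp
qed

lemma adj_char': "bop T \<Longrightarrow> cinner (adj T y) x = cinner y (T x)"
  by (metis adj_char cinner_commute)

lemma adj_unique:
  assumes "bop T" "\<And>x y. cinner (T x) y = cinner x (S y)"
  shows "adj T = S"
proof
  fix y show "adj T y = S y"
    by (rule cinner_ext_right) (metis adj_char[OF assms(1)] assms(2))
qed

lemma adj_bop:
  assumes T: "bop T"
  shows "bop (adj T)"
proof -
  obtain K where K: "\<And>x. norm (T x) \<le> norm x * K" "K \<ge> 0"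
    using bounded_linear.nonneg_bounded[OF bop_bl[OF T]] by blast
  have add: "adj T (x + y) = adj T x + adj T y" for x y
    by (rule cinner_ext_right) (simp add: adj_char[OF T, symmetric] cinner_add_right)
  have sc: "adj T (scaleC a x) = scaleC a (adj T x)" for a x
    by (rule cinner_ext_right) (simp add: adj_char[OF T, symmetric] cinner_scaleC_right)
  have nb: "norm (adj T y) \<le> norm y * K" for y
  proof -
    have "(norm (adj T y))\<^sup>2 = Re (cinner (adj T y) (adj T y))" by (simp add: Re_cinner_self)
    also have "\<dots> = Re (cinner (T (adj T y)) y)" by (simp add: adj_char[OF T])
    also have "\<dots> \<le> norm (T (adj T y)) * norm y" by (rule Re_cinner_le)
    also have "\<dots> \<le> norm (adj T y) * K * norm y" using K by (intro mult_right_mono) auto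
    finally have "norm (adj T y) * norm (adj T y) \<le> norm (adj T y) * (norm y * K)"
      by (simp add: power2_eq_square algebra_simps)
    then show ?thesis
      using K(2) by (cases "norm (adj T y) = 0") (auto simp: mult_le_cancel_left_pos)
  qed
  show ?thesis unfolding bop_def
  proof (intro conjI allI)
    show "bounded_linear (adj T)"
    proof (rule bounded_linear_intro[where K=K])
      fix r x show "adj T (scaleR r x) = scaleR r (adj T x)" by (simp add: scaleR_scaleC sc)
    qed (auto simp: add nb)
  qed (simp add: sc)
qed

lemma adj_adj: assumes "bop T" shows "adj (adj T) = T"
  by (rule adj_unique[OF adj_bop[OF assms]]) (rule adj_char'[OF assms])

lemma adj_comp: "bop S \<Longrightarrow> bop T \<Longrightarrow> adj (\<lambda>x. S (T x)) = (\<lambda>x. adj T (adj S x))"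
  by (rule adj_unique[OF bop_comp]) (simp_all add: adj_char)

lemma adj_add: "bop S \<Longrightarrow> bop T \<Longrightarrow> adj (\<lambda>x. S x + T x) = (\<lambda>x. adj S x + adj T x)"
  by (rule adj_unique[OF bop_add]) (simp_all add: adj_char cinner_add_left cinner_add_right)

lemma adj_diff: "bop S \<Longrightarrow> bop T \<Longrightarrow> adj (\<lambda>x. S x - T x) = (\<lambda>x. adj S x - adj T x)"
  by (rule adj_unique[OF bop_diff]) (simp_all add: adj_char cinner_diff_left cinner_diff_right)

lemma adj_scaleC: "bop S \<Longrightarrow> adj (\<lambda>x. scaleC c (S x)) = (\<lambda>x. scaleC (cnj c) (adj S x))"
  by (rule adj_unique[OF bop_scaleC_op]) (simp_all add: adj_char cinner_scaleC_left cinner_scaleC_right)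

lemma adj_id: "adj (\<lambda>x::'a::chilbert. x) = (\<lambda>x. x)"
  by (rule adj_unique[OF bop_id]) simp



subsection \<open>Coefficients of the binomial series of sqrt(1 - x)\<close>

definition cf :: "nat \<Rightarrow> real" where
  "cf k = ((1/2) gchoose k) * (-1) ^ k"

lemma cf_0: "cf 0 = 1"
  by (simp add: cf_def)

lemma neg1_pow_sq: "((-1::real) ^ k) * (-1) ^ k = 1"
  by (induct k) auto

lemma cf_poch: "cf k = pochhammer (-1/2) k / fact k"
proof -
  have "cf k = ((-1::real) ^ k * (-1) ^ k) * pochhammer (-1/2) k / fact k"
    unfolding cf_def gbinomial_pochhammer by (simp add: algebra_simps)
  then show ?thesis by (simp only: neg1_pow_sq mult_1)
qed

lemma cf_nonpos: "k \<ge> 1 \<Longrightarrow> cf k \<le> 0"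
proof -
  assume "k \<ge> 1"
  then obtain m where m: "k = Suc m" by (cases k) auto
  have "pochhammer (-1/2::real) (Suc m) = (-1/2) * pochhammer (1/2) m"
    by (simp add: pochhammer_rec)
  moreover have "pochhammer (1/2::real) m \<ge> 0" by (rule pochhammer_nonneg) simp
  ultimately have "pochhammer (-1/2::real) k \<le> 0" using m by simp
  then show ?thesis unfolding cf_poch by (simp add: divide_nonpos_pos)
qed

lemma cf_psum: "0 \<le> (\<Sum>k\<le>m. cf k)"
proof -
  have "(\<Sum>k\<le>m. cf k) = (-1) ^ m * ((1/2 - 1) gchoose m)"
    unfolding cf_def by (rule gbinomial_sum_lower_neg)
  also have "\<dots> = ((-1::real) ^ m * (-1) ^ m) * pochhammer (1/2) m / fact m"
    by (simp add: gbinomial_pochhammer algebra_simps)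
  also have "\<dots> = pochhammer (1/2) m / fact m" by (simp only: neg1_pow_sq mult_1)
  also have "\<dots> \<ge> 0" by (intro divide_nonneg_pos pochhammer_nonneg) auto
  finally show ?thesis .
qed

lemma cf_abs_psum_eq: "(\<Sum>k\<le>m. \<bar>cf k\<bar>) = 2 - (\<Sum>k\<le>m. cf k)"
proof (induct m)
  case 0 then show ?case by (simp add: cf_0)
next
  case (Suc m)
  have "\<bar>cf (Suc m)\<bar> = - cf (Suc m)" using cf_nonpos[of "Suc m"] by simp
  then show ?case using Suc by simp
qed

lemma cf_abs_psum: "(\<Sum>k\<le>m. \<bar>cf k\<bar>) \<le> 2"
  using cf_abs_psum_eq[of m] cf_psum[of m] by simp

lemma summable_abs_cf: "summable (\<lambda>k. \<bar>cf k\<bar>)"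
  by (rule bounded_imp_summable[of _ 2]) (auto intro: cf_abs_psum)

lemma summable_cf: "summable cf"
  using summable_abs_cf by (rule summable_rabs_cancel)

lemma suminf_cf_nonneg: "0 \<le> suminf cf"
  by (rule LIMSEQ_le_const[OF summable_LIMSEQ'[OF summable_cf]]) (auto intro: cf_psum)

lemma cf_conv: "(\<Sum>i\<le>k. cf i * cf (k - i)) = (if k = 0 then 1 else if k = 1 then -1 else 0)"
proof -
  have "(\<Sum>i\<le>k. cf i * cf (k - i)) = (\<Sum>i\<in>{0..k}. ((1/2) gchoose i) * ((1/2) gchoose (k - i)) * (-1) ^ k)"
  proof (rule sum.cong)
    fix i assume "i \<in> {0..k}"
    then have "(-1::real) ^ i * (-1) ^ (k - i) = (-1) ^ k"
      by (simp add: power_add[symmetric])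
    then show "cf i * cf (k - i) = ((1/2) gchoose i) * ((1/2) gchoose (k - i)) * (-1) ^ k"
      unfolding cf_def by (metis (no_types, lifting) mult.assoc mult.left_commute)
  qed (simp add: atMost_atLeast0)
  also have "\<dots> = (\<Sum>i\<in>{0..k}. ((1/2) gchoose i) * ((1/2) gchoose (k - i))) * (-1) ^ k"
    by (simp add: sum_distrib_right)
  also have "\<dots> = ((1/2 + 1/2 :: real) gchoose k) * (-1) ^ k"
    by (simp only: gbinomial_Vandermonde)
  also have "(1/2 + 1/2 :: real) = of_nat 1" by simp
  also have "(of_nat 1 gchoose k) = (of_nat (1 choose k) :: real)" by (simp only: binomial_gbinomial)
  finally show ?thesis
    by (cases k; cases "k - 1") auto
qed

lemma Cauchy_product_sums_bil:
  fixes a :: "nat \<Rightarrow> 'a::banach" and b :: "nat \<Rightarrow> 'b::banach"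
  assumes bb: "bounded_bilinear pr"
    and a: "summable (\<lambda>k. norm (a k))"
    and b: "summable (\<lambda>k. norm (b k))"
  shows "(\<lambda>k. \<Sum>i\<le>k. pr (a i) (b (k - i))) sums (pr (\<Sum>k. a k) (\<Sum>k. b k))"
proof -
  obtain K where K: "K > 0" "\<And>x y. norm (pr x y) \<le> norm x * norm y * K"
    using bounded_bilinear.pos_bounded[OF bb] by blast
  let ?S1 = "\<lambda>n::nat. {..<n} \<times> {..<n}"
  let ?S2 = "\<lambda>n::nat. {(i,j). i + j < n}"
  have S1_mono: "\<And>m n. m \<le> n \<Longrightarrow> ?S1 m \<subseteq> ?S1 n" by auto
  have S2_le_S1: "\<And>n. ?S2 n \<subseteq> ?S1 n" by auto
  have S1_le_S2: "\<And>n. ?S1 (n div 2) \<subseteq> ?S2 n" by auto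
  have finite_S1: "\<And>n. finite (?S1 n)" by simp
  with S2_le_S1 have finite_S2: "\<And>n. finite (?S2 n)" by (rule finite_subset)
  let ?g = "\<lambda>(i,j). pr (a i) (b j)"
  let ?f = "\<lambda>(i,j). norm (a i) * norm (b j) * K"
  have f_nonneg: "\<And>x. 0 \<le> ?f x" using K by auto
  then have norm_sum_f: "\<And>A. norm (sum ?f A) = sum ?f A"
    unfolding real_norm_def
    by (simp only: abs_of_nonneg sum_nonneg [rule_format])
  have sp: "pr (sum a {..<n}) (sum b {..<n}) = sum ?g (?S1 n)" for n
  proof -
    have "pr (sum a {..<n}) (sum b {..<n}) = (\<Sum>i<n. \<Sum>j<n. pr (a i) (b j))"
      by (subst bounded_bilinear.sum_left[OF bb]) (simp add: bounded_bilinear.sum_right[OF bb])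
    also have "\<dots> = sum ?g (?S1 n)" by (simp add: sum.cartesian_product)
    finally show ?thesis .
  qed
  have "(\<lambda>n. pr (\<Sum>k<n. a k) (\<Sum>k<n. b k)) \<longlonglongrightarrow> pr (\<Sum>k. a k) (\<Sum>k. b k)"
    by (intro bounded_bilinear.tendsto[OF bb] summable_LIMSEQ summable_norm_cancel [OF a] summable_norm_cancel [OF b])
  then have 1: "(\<lambda>n. sum ?g (?S1 n)) \<longlonglongrightarrow> pr (\<Sum>k. a k) (\<Sum>k. b k)"
    by (simp only: sp)
  have spf: "(\<Sum>k<n. norm (a k)) * (\<Sum>k<n. norm (b k)) * K = sum ?f (?S1 n)" for n
  proof -
    have "(\<Sum>k<n. norm (a k)) * (\<Sum>k<n. norm (b k)) * K = (\<Sum>i<n. \<Sum>j<n. norm (a i) * norm (b j) * K)"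
      by (simp add: sum_product sum_distrib_left sum_distrib_right mult.assoc; subst sum.swap; simp)
    also have "\<dots> = sum ?f (?S1 n)" by (simp add: sum.cartesian_product)
    finally show ?thesis .
  qed
  have "(\<lambda>n. (\<Sum>k<n. norm (a k)) * (\<Sum>k<n. norm (b k)) * K) \<longlonglongrightarrow> (\<Sum>k. norm (a k)) * (\<Sum>k. norm (b k)) * K"
    using a b by (intro tendsto_mult summable_LIMSEQ tendsto_const)
  then have "(\<lambda>n. sum ?f (?S1 n)) \<longlonglongrightarrow> (\<Sum>k. norm (a k)) * (\<Sum>k. norm (b k)) * K"
    by (simp only: spf)
  then have "convergent (\<lambda>n. sum ?f (?S1 n))"
    by (rule convergentI)
  then have Cauchy: "Cauchy (\<lambda>n. sum ?f (?S1 n))"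
    by (rule convergent_Cauchy)
  have "Zfun (\<lambda>n. sum ?f (?S1 n - ?S2 n)) sequentially"
  proof (rule ZfunI, simp only: eventually_sequentially norm_sum_f)
    fix r :: real
    assume r: "0 < r"
    from CauchyD [OF Cauchy r] obtain N
      where "\<forall>m\<ge>N. \<forall>n\<ge>N. norm (sum ?f (?S1 m) - sum ?f (?S1 n)) < r" ..
    then have "\<And>m n. N \<le> n \<Longrightarrow> n \<le> m \<Longrightarrow> norm (sum ?f (?S1 m - ?S1 n)) < r"
      by (simp only: sum_diff finite_S1 S1_mono)
    then have N: "\<And>m n. N \<le> n \<Longrightarrow> n \<le> m \<Longrightarrow> sum ?f (?S1 m - ?S1 n) < r"
      by (simp only: norm_sum_f)
    show "\<exists>N. \<forall>n\<ge>N. sum ?f (?S1 n - ?S2 n) < r"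
    proof (intro exI allI impI)
      fix n
      assume "2 * N \<le> n"
      then have n: "N \<le> n div 2" by simp
      have "sum ?f (?S1 n - ?S2 n) \<le> sum ?f (?S1 n - ?S1 (n div 2))"
        by (intro sum_mono2 finite_Diff finite_S1 f_nonneg Diff_mono subset_refl S1_le_S2)
      also have "\<dots> < r"
        using n div_le_dividend by (rule N)
      finally show "sum ?f (?S1 n - ?S2 n) < r" .
    qed
  qed
  then have "Zfun (\<lambda>n. sum ?g (?S1 n - ?S2 n)) sequentially"
    apply (rule Zfun_le [rule_format])
    apply (simp only: norm_sum_f)
    apply (rule order_trans [OF norm_sum sum_mono])
    apply (auto simp add: K(2))
    done
  then have 2: "(\<lambda>n. sum ?g (?S1 n) - sum ?g (?S2 n)) \<longlonglongrightarrow> 0"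
    unfolding tendsto_Zfun_iff diff_0_right
    by (simp only: sum_diff finite_S1 S2_le_S1)
  with 1 have "(\<lambda>n. sum ?g (?S2 n)) \<longlonglongrightarrow> pr (\<Sum>k. a k) (\<Sum>k. b k)"
    by (rule Lim_transform2)
  then show ?thesis
    by (simp only: sums_def sum.triangle_reindex)
qed

fun bpow :: "('a::real_normed_vector \<Rightarrow>\<^sub>L 'a) \<Rightarrow> nat \<Rightarrow> ('a \<Rightarrow>\<^sub>L 'a)" where
  "bpow A 0 = id_blinfun"
| "bpow A (Suc k) = A o\<^sub>L bpow A k"

lemma bpow_apply: "blinfun_apply (bpow A k) x = (blinfun_apply A ^^ k) x"
  by (induct k arbitrary: x) auto

lemma norm_bpow: "norm A \<le> 1 \<Longrightarrow> norm (bpow A k) \<le> 1"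
proof (induct k)
  case 0 then show ?case by (simp add: norm_blinfun_id_le)
next
  case (Suc k)
  have "norm (bpow A (Suc k)) \<le> norm A * norm (bpow A k)" by (simp add: norm_blinfun_compose)
  also have "\<dots> \<le> 1 * 1" using Suc by (intro mult_mono) auto
  finally show ?case by simp
qed

lemma funpow_comm:
  assumes "\<And>x. S (Q x) = Q' (S x)"
  shows "S ((Q ^^ k) x) = (Q' ^^ k) (S x)"
  by (induct k arbitrary: x) (auto simp: assms)

lemma funpow_contr:
  fixes Q :: "'a::real_normed_vector \<Rightarrow> 'a"
  assumes "\<And>x. norm (Q x) \<le> norm (x::'a::real_normed_vector)"
  shows "norm ((Q ^^ k) x) \<le> norm x"
proof (induct k)
  case (Suc k)
  have "norm ((Q ^^ Suc k) x) = norm (Q ((Q ^^ k) x))" by simp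
  also have "\<dots> \<le> norm ((Q ^^ k) x)" by (rule assms)
  finally show ?case using Suc by simp
qed simp

lemma bl_funpow: fixes Q :: "'a::real_normed_vector \<Rightarrow> 'a" assumes Q: "bounded_linear Q" shows "bounded_linear (Q ^^ k)"
proof (induct k)
  case 0
  show ?case by (simp add: id_def)
next
  case (Suc k)
  have "Q ^^ Suc k = (\<lambda>x. Q ((Q ^^ k) x))" by (rule ext) simp
  then show ?case using bounded_linear_compose[OF Q Suc] by simp
qed

subsection \<open>The square root series\<close>

definition contr :: "('a::chilbert \<Rightarrow> 'a) \<Rightarrow> bool" where
  "contr Q \<longleftrightarrow> bounded_linear Q \<and> (\<forall>x. norm (Q x) \<le> norm x)"

definition sqa :: "('a::chilbert \<Rightarrow> 'a) \<Rightarrow> nat \<Rightarrow> ('a \<Rightarrow>\<^sub>L 'a)" where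
  "sqa Q k = cf k *\<^sub>R bpow (Blinfun Q) k"

definition sq :: "('a::chilbert \<Rightarrow> 'a) \<Rightarrow> 'a \<Rightarrow> 'a" where
  "sq Q = blinfun_apply (suminf (sqa Q))"

lemma contr_normB: "contr Q \<Longrightarrow> norm (Blinfun Q) \<le> 1"
  unfolding contr_def
  by (rule norm_blinfun_bound) (auto simp: bounded_linear_Blinfun_apply)

lemma summable_norm_sqa: "contr Q \<Longrightarrow> summable (\<lambda>k. norm (sqa Q k))"
proof (rule summable_comparison_test[OF _ summable_abs_cf])
  assume Q: "contr Q"
  show "\<exists>N. \<forall>n\<ge>N. norm (norm (sqa Q n)) \<le> \<bar>cf n\<bar>"
  proof (intro exI allI impI)
    fix n
    have "norm (sqa Q n) = \<bar>cf n\<bar> * norm (bpow (Blinfun Q) n)" by (simp add: sqa_def)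
    also have "\<dots> \<le> \<bar>cf n\<bar> * 1" by (intro mult_left_mono norm_bpow contr_normB Q) auto
    finally show "norm (norm (sqa Q n)) \<le> \<bar>cf n\<bar>" by simp
  qed
qed

lemma summable_sqa: "contr Q \<Longrightarrow> summable (sqa Q)"
  by (rule summable_norm_cancel[OF summable_norm_sqa])

lemma sqa_apply: "contr Q \<Longrightarrow> blinfun_apply (sqa Q k) x = cf k *\<^sub>R (Q ^^ k) x"
  by (simp add: sqa_def bpow_apply contr_def bounded_linear_Blinfun_apply blinfun.scaleR_left)

lemma sq_sums: "contr Q \<Longrightarrow> (\<lambda>k. cf k *\<^sub>R (Q ^^ k) x) sums sq Q x"
proof -
  assume Q: "contr Q"
  have "(\<lambda>k. blinfun_apply (sqa Q k) x) sums blinfun_apply (suminf (sqa Q)) x"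
    by (rule bounded_linear.sums[OF blinfun.bounded_linear_left summable_sums[OF summable_sqa[OF Q]]])
  then show ?thesis by (simp add: sqa_apply[OF Q] sq_def)
qed

lemma sq_apply: "contr Q \<Longrightarrow> sq Q x = (\<Sum>k. cf k *\<^sub>R (Q ^^ k) x)"
  using sq_sums sums_unique by blast

lemma sq_bl: "bounded_linear (sq Q)"
  unfolding sq_def by (rule blinfun.bounded_linear_right)

lemma sq_comm:
  assumes Q: "contr Q" and Q': "contr Q'" and S: "bounded_linear S"
    and c: "\<And>x. S (Q x) = Q' (S x)"
  shows "S (sq Q x) = sq Q' (S x)"
proof -
  have "(\<lambda>k. S (cf k *\<^sub>R (Q ^^ k) x)) sums S (sq Q x)"
    by (rule bounded_linear.sums[OF S sq_sums[OF Q]])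
  then have "(\<lambda>k. cf k *\<^sub>R (Q' ^^ k) (S x)) sums S (sq Q x)"
    by (simp add: bl_scaleR[OF S] funpow_comm[of S Q Q', OF c])
  then show ?thesis using sq_sums[OF Q'] sums_unique2 by blast
qed

lemma sq_sq:
  assumes Q: "contr Q"
  shows "sq Q (sq Q x) = x - Q x"
proof -
  let ?A = "Blinfun Q"
  have BQ: "blinfun_apply ?A = Q" using Q by (simp add: contr_def bounded_linear_Blinfun_apply)
  have s: "summable (\<lambda>k. norm (sqa Q k))" by (rule summable_norm_sqa[OF Q])
  have cp: "(\<lambda>k. \<Sum>i\<le>k. sqa Q i o\<^sub>L sqa Q (k - i)) sums (suminf (sqa Q) o\<^sub>L suminf (sqa Q))"
    by (rule Cauchy_product_sums_bil[OF bounded_bilinear_blinfun_compose s s])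
  have trm: "(\<Sum>i\<le>k. sqa Q i o\<^sub>L sqa Q (k - i)) =
      (if k = 0 then 1 else if k = 1 then -1 else 0) *\<^sub>R bpow ?A k" for k
  proof -
    have "sqa Q i o\<^sub>L sqa Q (k - i) = (cf i * cf (k - i)) *\<^sub>R bpow ?A k" if "i \<le> k" for i
    proof (rule blinfun_eqI)
      fix y
      have "(Q ^^ i) ((Q ^^ (k - i)) y) = (Q ^^ k) y"
        using that by (metis funpow_add le_add_diff_inverse o_apply)
      moreover have "(Q ^^ i) (r *\<^sub>R z) = r *\<^sub>R (Q ^^ i) z" for r z
        using bl_scaleR[OF bl_funpow[of Q i]] Q by (simp add: contr_def)
      ultimately show "blinfun_apply (sqa Q i o\<^sub>L sqa Q (k - i)) y = blinfun_apply ((cf i * cf (k - i)) *\<^sub>R bpow ?A k) y"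
        by (simp add: sqa_apply[OF Q] bpow_apply BQ blinfun.scaleR_left)
    qed
    then have "(\<Sum>i\<le>k. sqa Q i o\<^sub>L sqa Q (k - i)) = (\<Sum>i\<le>k. (cf i * cf (k - i)) *\<^sub>R bpow ?A k)"
      by (intro sum.cong) auto
    also have "\<dots> = (\<Sum>i\<le>k. cf i * cf (k - i)) *\<^sub>R bpow ?A k"
      by (simp add: scaleR_sum_left)
    finally show ?thesis by (simp only: cf_conv)
  qed
  have "(\<lambda>k. (if k = 0 then 1 else if k = 1 then -1 else 0) *\<^sub>R bpow ?A k) sums
      (\<Sum>k\<in>{0,1}. (if k = 0 then 1 else if k = 1 then -1 else 0) *\<^sub>R bpow ?A k)"
    by (rule sums_finite) auto
  then have "(\<lambda>k. \<Sum>i\<le>k. sqa Q i o\<^sub>L sqa Q (k - i)) sums (id_blinfun - (?A o\<^sub>L id_blinfun))"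
    by (simp add: trm)
  then have eq: "suminf (sqa Q) o\<^sub>L suminf (sqa Q) = id_blinfun - (?A o\<^sub>L id_blinfun)"
    using cp sums_unique2 by blast
  have "sq Q (sq Q x) = blinfun_apply (suminf (sqa Q) o\<^sub>L suminf (sqa Q)) x"
    by (simp add: sq_def)
  also have "\<dots> = x - Q x" by (simp add: eq blinfun.diff_left BQ)
  finally show ?thesis .
qed



definition selfadj :: "('a::chilbert \<Rightarrow> 'a) \<Rightarrow> bool" where
  "selfadj Q \<longleftrightarrow> (\<forall>x y. cinner (Q x) y = cinner x (Q y))"

lemma Im_eq_cnj: "z = cnj z \<Longrightarrow> Im z = 0"
  by (metis complex_cnj_cancel_iff complex_cnj_zero_iff cnj.simps(2) neg_equal_zero) 

lemma pos_selfadj: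
  assumes S: "positive_op S"
  shows "cinner (S x) y = cinner x (S y)"
proof -
  have b: "bop S" using S by (simp add: positive_op_def)
  define q where "q x y = cinner (S x) y - cinner x (S y)" for x y
  have qd: "q u u = 0" for u
  proof -
    have "Im (cinner (S u) u) = 0" using S by (simp add: positive_op_def)
    then have "cinner (S u) u = of_real (Re (cinner (S u) u))" by (simp add: complex_eq_iff)
    moreover have "cinner u (S u) = cnj (cinner (S u) u)" by (rule cinner_commute)
    ultimately show ?thesis unfolding q_def by (metis complex_cnj_complex_of_real diff_self)
  qed
  have qadd: "q (u + v) (u + v) = q u u + q u v + q v u + q v v" for u v
    unfolding q_def by (simp add: bl_add[OF bop_bl[OF b]] cinner_add_left cinner_add_right algebra_simps)
  have qsc1: "q u (scaleC c v) = c * q u v" for u v c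
    unfolding q_def by (simp add: bop_scaleC[OF b] cinner_scaleC_right algebra_simps)
  have qsc2: "q (scaleC c u) v = cnj c * q u v" for u v c
    unfolding q_def by (simp add: bop_scaleC[OF b] cinner_scaleC_left algebra_simps)
  have q1: "q x y + q y x = 0" using qadd[of x y] by (simp add: qd)
  have "q x (scaleC \<i> y) + q (scaleC \<i> y) x = 0"
    using qadd[of x "scaleC \<i> y"] by (simp add: qd)
  then have q2: "\<i> * q x y - \<i> * q y x = 0" by (simp add: qsc1 qsc2)
  have "q x y = 0"
  proof -
    have "q x y - q y x = 0" using q2 by (metis complex_i_not_zero mult_eq_0_iff right_diff_distrib)
    with q1 show ?thesis by (simp add: algebra_simps)
  qed
  then show ?thesis by (simp add: q_def)
qed

lemma pos_zero:
  assumes S: "positive_op S" and z: "cinner (S y) y = 0"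
  shows "S y = 0"
proof (rule ccontr)
  assume ne: "S y \<noteq> 0"
  have b: "bop S" using S by (simp add: positive_op_def)
  define u where "u = S y"
  define a where "a = (norm u)\<^sup>2"
  define bb where "bb = Re (cinner (S u) u)"
  have a0: "a > 0" using ne by (simp add: a_def u_def)
  have b0: "bb \<ge> 0" using S by (simp add: positive_op_def bb_def)
  define t where "t = - a / (bb + 1)"
  have "Re (cinner (S (y + scaleR t u)) (y + scaleR t u)) \<ge> 0"
    using S by (simp add: positive_op_def)
  moreover have "cinner (S (y + scaleR t u)) (y + scaleR t u) =
      cinner (S y) y + of_real t * cinner (S y) u + of_real t * cinner (S u) y + of_real t * of_real t * cinner (S u) u"
    by (simp add: bl_add[OF bop_bl[OF b]] bl_scaleR[OF bop_bl[OF b]] cinner_add_left cinner_add_right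
        cinner_scaleR_left cinner_scaleR_right algebra_simps)
  moreover have "cinner (S y) u = of_real a" by (simp add: u_def a_def cinner_self)
  moreover have "cinner (S u) y = of_real a"
    using pos_selfadj[OF S, of u y] by (simp add: u_def a_def cinner_self)
  ultimately have "0 \<le> 2 * (a * t) + t * t * bb"
    using z by (simp add: bb_def)
  moreover have "2 * (a * t) + t * t * bb < 0"
  proof -
    have bp: "bb + 1 > 0" using b0 by simp
    have t0: "t < 0" unfolding t_def using a0 bp by (simp add: divide_neg_pos)
    have q: "bb / (bb + 1) \<le> 1" using bp by simp
    have "t * bb = - (a * (bb / (bb + 1)))" unfolding t_def by simp
    also have "\<dots> \<ge> - a"
    proof -
      have "a * (bb / (bb + 1)) \<le> a * 1" using q a0 by (intro mult_left_mono) auto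
      then show ?thesis by simp
    qed
    finally have "2 * a + t * bb > 0" using a0 by simp
    then have "t * (2 * a + t * bb) < 0" using t0 by (simp add: mult_neg_pos)
    then show ?thesis by (simp add: algebra_simps)
  qed
  ultimately show False by simp
qed

lemma selfadj_funpow:
  fixes Q :: "'a::chilbert \<Rightarrow> 'a"
  shows "selfadj Q \<Longrightarrow> cinner ((Q ^^ k) x) y = cinner x ((Q ^^ k) y)"
  by (induct k arbitrary: x y) (auto simp: selfadj_def funpow_swap1)

lemma sq_bop:
  assumes Q: "contr Q" "bop Q"
  shows "bop (sq Q)"
  unfolding bop_def
proof (intro conjI allI)
  show "bounded_linear (sq Q)" by (rule sq_bl)
  fix a x show "sq Q (scaleC a x) = scaleC a (sq Q x)"
    using sq_comm[OF Q(1) Q(1) bounded_linear_scaleC, of a x] bop_scaleC[OF Q(2)] by metis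
qed

lemma sq_positive:
  assumes Q: "contr Q" "bop Q" "selfadj Q"
  shows "positive_op (sq Q)"
  unfolding positive_op_def
proof (intro conjI allI)
  show "bop (sq Q)" by (rule sq_bop[OF Q(1,2)])
  fix x :: 'a
  have bli: "bounded_linear (\<lambda>v. cinner v x)"
    by (rule bounded_bilinear.bounded_linear_left[OF bounded_bilinear_cinner])
  have s: "(\<lambda>k. of_real (cf k) * cinner ((Q ^^ k) x) x) sums cinner (sq Q x) x"
    using bounded_linear.sums[OF bli sq_sums[OF Q(1), of x]] by (simp add: cinner_scaleR_left)
  have imk: "Im (cinner ((Q ^^ k) x) x) = 0" for k
  proof (rule Im_eq_cnj)
    have "cinner ((Q ^^ k) x) x = cinner x ((Q ^^ k) x)" by (rule selfadj_funpow[OF Q(3)])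
    also have "\<dots> = cnj (cinner ((Q ^^ k) x) x)" by (rule cinner_commute)
    finally show "cinner ((Q ^^ k) x) x = cnj (cinner ((Q ^^ k) x) x)" .
  qed
  have "(\<lambda>k. Im (of_real (cf k) * cinner ((Q ^^ k) x) x)) sums Im (cinner (sq Q x) x)"
    by (rule bounded_linear.sums[OF bounded_linear_Im s])
  then have "(\<lambda>k. 0) sums Im (cinner (sq Q x) x)" by (simp add: imk)
  then show "Im (cinner (sq Q x) x) = 0" using sums_zero sums_unique2 by blast
  have sr: "(\<lambda>k. cf k * Re (cinner ((Q ^^ k) x) x)) sums Re (cinner (sq Q x) x)"
    using bounded_linear.sums[OF bounded_linear_Re s] by simp
  have sc: "(\<lambda>k. cf k * (norm x)\<^sup>2) sums (suminf cf * (norm x)\<^sup>2)"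
    by (rule sums_mult2[OF summable_sums[OF summable_cf]])
  have le: "cf k * (norm x)\<^sup>2 \<le> cf k * Re (cinner ((Q ^^ k) x) x)" for k
  proof (cases "k = 0")
    case True then show ?thesis by (simp add: Re_cinner_self)
  next
    case False
    have "Re (cinner ((Q ^^ k) x) x) \<le> norm ((Q ^^ k) x) * norm x" by (rule Re_cinner_le)
    also have "\<dots> \<le> norm x * norm x"
      using Q(1) by (intro mult_right_mono funpow_contr) (auto simp: contr_def)
    finally have "Re (cinner ((Q ^^ k) x) x) \<le> (norm x)\<^sup>2" by (simp add: power2_eq_square)
    moreover have "cf k \<le> 0" using False by (intro cf_nonpos) simp
    ultimately show ?thesis by (rule mult_left_mono_neg)
  qed
  have "suminf cf * (norm x)\<^sup>2 \<le> Re (cinner (sq Q x) x)" by (rule sums_le[OF le sc sr])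
  moreover have "0 \<le> suminf cf * (norm x)\<^sup>2" using suminf_cf_nonneg by simp
  ultimately show "0 \<le> Re (cinner (sq Q x) x)" by linarith
qed

lemma sq_unique:
  assumes Q: "contr Q" "bop Q" "selfadj Q"
    and S: "positive_op S" and SS: "S \<circ> S = (\<lambda>x. x - Q x)"
  shows "S = sq Q"
proof
  fix x
  let ?R = "sq Q"
  have bS: "bop S" using S by (simp add: positive_op_def)
  have R: "positive_op ?R" by (rule sq_positive[OF Q])
  have bR: "bop ?R" using R by (simp add: positive_op_def)
  have SSx: "S (S v) = v - Q v" for v using SS by (metis comp_apply)
  have SQ: "S (Q v) = Q (S v)" for v
  proof -
    have "Q v = v - S (S v)" using SSx[of v] by simp
    then have "S (Q v) = S v - S (S (S v))" by (simp add: bl_diff[OF bop_bl[OF bS]])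
    also have "\<dots> = Q (S v)" using SSx[of "S v"] by simp
    finally show ?thesis .
  qed
  have SR: "S (?R v) = ?R (S v)" for v
    by (rule sq_comm[OF Q(1) Q(1) bop_bl[OF bS] SQ])
  define y where "y = S x - ?R x"
  have "S y + ?R y = 0"
  proof -
    have "S y + ?R y = S (S x) - S (?R x) + (?R (S x) - ?R (?R x))"
      unfolding y_def by (simp add: bl_diff[OF bop_bl[OF bS]] bl_diff[OF bop_bl[OF bR]])
    also have "\<dots> = 0" using SSx[of x] sq_sq[OF Q(1), of x] SR[of x] by simp
    finally show ?thesis .
  qed
  then have "cinner (S y) y + cinner (?R y) y = 0"
    by (metis cinner_add_left cinner_zero_left)
  moreover have "Re (cinner (S y) y) \<ge> 0" "Im (cinner (S y) y) = 0"
    "Re (cinner (?R y) y) \<ge> 0" "Im (cinner (?R y) y) = 0"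
    using S R by (auto simp: positive_op_def)
  ultimately have "cinner (S y) y = 0" "cinner (?R y) y = 0"
    by (auto simp: complex_eq_iff)
  then have Sy: "S y = 0" and Ry: "?R y = 0" using pos_zero[OF S] pos_zero[OF R] by auto
  have "cinner y y = cinner y (S x) - cinner y (?R x)"
    by (simp add: y_def[symmetric] cinner_diff_right[symmetric])
  also have "\<dots> = cinner (S y) x - cinner (?R y) x"
    by (simp add: pos_selfadj[OF S] pos_selfadj[OF R])
  also have "\<dots> = 0" by (simp add: Sy Ry)
  finally have "y = 0" by (simp add: cinner_self_eq_0)
  then show "S x = ?R x" by (simp add: y_def)
qed

lemma op_sqrt_eq:
  assumes Q: "contr Q" "bop Q" "selfadj Q"
  shows "op_sqrt (\<lambda>x. x - Q x) = sq Q"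
  unfolding op_sqrt_def
proof (rule the_equality)
  show "positive_op (sq Q) \<and> sq Q \<circ> sq Q = (\<lambda>x. x - Q x)"
    using sq_positive[OF Q] sq_sq[OF Q(1)] by (auto simp: comp_def)
  fix S assume "positive_op S \<and> S \<circ> S = (\<lambda>x. x - Q x)"
  then show "S = sq Q" using sq_unique[OF Q] by blast
qed

lemma adj_contr:
  assumes P: "bop P" and c: "\<And>x. norm (P x) \<le> norm x"
  shows "norm (adj P y) \<le> norm y"
proof -
  have "(norm (adj P y))\<^sup>2 = Re (cinner (adj P y) (adj P y))" by (simp add: Re_cinner_self)
  also have "\<dots> = Re (cinner (P (adj P y)) y)" by (simp add: adj_char[OF P])
  also have "\<dots> \<le> norm (P (adj P y)) * norm y" by (rule Re_cinner_le)
  also have "\<dots> \<le> norm (adj P y) * norm y" using c by (intro mult_right_mono) auto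
  finally have "norm (adj P y) * norm (adj P y) \<le> norm (adj P y) * norm y"
    by (simp add: power2_eq_square)
  then show ?thesis
    by (cases "norm (adj P y) = 0") (auto simp: mult_le_cancel_left_pos)
qed

lemma QQ_props:
  assumes P: "bop P" and c: "\<And>x. norm (P x) \<le> norm x"
  shows "contr (\<lambda>x. adj P (P x))" "bop (\<lambda>x. adj P (P x))" "selfadj (\<lambda>x. adj P (P x))"
proof -
  show b: "bop (\<lambda>x. adj P (P x))" by (rule bop_comp[OF adj_bop[OF P] P])
  show "contr (\<lambda>x. adj P (P x))" unfolding contr_def
    using bop_bl[OF b] adj_contr[OF P c] c order_trans by blast
  show "selfadj (\<lambda>x. adj P (P x))" unfolding selfadj_def
    by (simp add: adj_char[OF P] adj_char'[OF P])
qed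

lemma defect_eq:
  assumes P: "bop P" and c: "\<And>x. norm (P x) \<le> norm x"
  shows "defect P = sq (\<lambda>x. adj P (P x))"
  unfolding defect_def by (rule op_sqrt_eq[OF QQ_props[OF P c]])

lemma defect_adj_eq:
  assumes P: "bop P" and c: "\<And>x. norm (P x) \<le> norm x"
  shows "defect (adj P) = sq (\<lambda>x. P (adj P x))"
proof -
  have "defect (adj P) = sq (\<lambda>x. adj (adj P) (adj P x))"
    by (rule defect_eq[OF adj_bop[OF P] adj_contr[OF P c]])
  then show ?thesis by (simp add: adj_adj[OF P])
qed

subsection \<open>Neumann series\<close>

lemma neumann:
  fixes T :: "'a::chilbert \<Rightarrow> 'a"
  assumes T: "bop T" and c: "\<And>x. norm (T x) \<le> r * norm x" and r: "0 \<le> r" "r < 1"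
  shows "op_inv (\<lambda>y. y - T y) = (\<lambda>y. \<Sum>k. (T ^^ k) y)
    \<and> bop (\<lambda>y. \<Sum>k. (T ^^ k) y)
    \<and> (\<forall>y. (\<Sum>k. (T ^^ k) (y - T y)) = y)
    \<and> (\<forall>y. (\<Sum>k. (T ^^ k) y) - T (\<Sum>k. (T ^^ k) y) = y)"
proof -
  define N where "N y = (\<Sum>k. (T ^^ k) y)" for y
  have blT: "bounded_linear T" by (rule bop_bl[OF T])
  have nk: "norm ((T ^^ k) y) \<le> r ^ k * norm y" for k y
  proof (induct k)
    case (Suc k)
    have "norm ((T ^^ Suc k) y) = norm (T ((T ^^ k) y))" by simp
    also have "\<dots> \<le> r * norm ((T ^^ k) y)" by (rule c)
    also have "\<dots> \<le> r * (r ^ k * norm y)" using Suc r by (intro mult_left_mono) auto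
    finally show ?case by simp
  qed simp
  have sg: "summable (\<lambda>k. r ^ k * norm y)" for y
    using r by (intro summable_mult2 summable_geometric) simp
  have sn: "summable (\<lambda>k. norm ((T ^^ k) y))" for y
    by (rule summable_comparison_test[OF _ sg]) (use nk in auto)
  have s: "summable (\<lambda>k. (T ^^ k) y)" for y by (rule summable_norm_cancel[OF sn])
  have blk: "bounded_linear (T ^^ k)" for k by (rule bl_funpow[OF blT])
  have TN: "T (N y) = N y - y" for y
  proof -
    have "T (N y) = (\<Sum>k. T ((T ^^ k) y))" unfolding N_def by (rule bounded_linear.suminf[OF blT s])
    also have "\<dots> = (\<Sum>k. (T ^^ Suc k) y)" by simp
    also have "\<dots> = N y - (T ^^ 0) y" unfolding N_def by (rule suminf_split_head[OF s])
    finally show ?thesis by simp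
  qed
  have NT: "N (y - T y) = y" for y
  proof -
    have "N (y - T y) = (\<Sum>k. (T ^^ k) y - (T ^^ Suc k) y)"
      unfolding N_def by (simp add: bl_diff[OF blk] funpow_swap1)
    also have "\<dots> = N y - (\<Sum>k. (T ^^ Suc k) y)"
    proof -
      have sS: "summable (\<lambda>k. (T ^^ Suc k) y)" using summable_Suc_iff[of "\<lambda>k. (T ^^ k) y"] s[of y] by simp
      show ?thesis unfolding N_def by (rule suminf_diff[symmetric, OF s sS])
    qed
    also have "(\<Sum>k. (T ^^ Suc k) y) = N y - y"
      unfolding N_def using suminf_split_head[OF s] by simp
    finally show ?thesis by simp
  qed
  have INv: "N y - T (N y) = y" for y using TN by simp
  have blN: "bounded_linear N"
  proof (rule bounded_linear_intro[where K="1 / (1 - r)"])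
    fix x y show "N (x + y) = N x + N y"
      unfolding N_def by (simp add: bl_add[OF blk] suminf_add[OF s s])
  next
    fix a x show "N (scaleR a x) = scaleR a (N x)"
      unfolding N_def
      by (simp add: bl_scaleR[OF blk] bounded_linear.suminf[OF bounded_linear_scaleR_right s])
  next
    fix x
    have "norm (N x) \<le> (\<Sum>k. norm ((T ^^ k) x))" unfolding N_def by (rule summable_norm[OF sn])
    also have "\<dots> \<le> (\<Sum>k. r ^ k * norm x)" by (rule suminf_le[OF nk sn sg])
    also have "\<dots> = norm x * (1 / (1 - r))"
      using r by (simp add: suminf_mult2[OF summable_geometric, symmetric] suminf_geometric)
    finally show "norm (N x) \<le> norm x * (1 / (1 - r))" .
  qed
  have bN: "bop N"
    unfolding bop_def
  proof (intro conjI allI blN)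
    fix a x
    have "N (scaleC a x) = N (scaleC a (N x - T (N x)))" by (simp add: INv)
    also have "\<dots> = N (scaleC a (N x) - T (scaleC a (N x)))" by (simp add: bop_scaleC[OF T] scaleC_diff_right)
    also have "\<dots> = scaleC a (N x)" by (rule NT)
    finally show "N (scaleC a x) = scaleC a (N x)" .
  qed
  have "op_inv (\<lambda>y. y - T y) = N"
    unfolding op_inv_def
  proof (rule the_equality)
    show "bop N \<and> N \<circ> (\<lambda>y. y - T y) = id \<and> (\<lambda>y. y - T y) \<circ> N = id"
      using bN NT INv by (auto simp: fun_eq_iff)
    fix S assume S: "bop S \<and> S \<circ> (\<lambda>y. y - T y) = id \<and> (\<lambda>y. y - T y) \<circ> S = id"
    show "S = N"
    proof
      fix y
      have "S y = S (N y - T (N y))" by (simp add: INv)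
      also have "\<dots> = N y" using S by (metis comp_apply id_apply)
      finally show "S y = N y" .
    qed
  qed
  then show ?thesis using bN NT INv unfolding N_def by simp
qed



lemma bop_app_add: "bop T \<Longrightarrow> T (x + y) = T x + T y"
  by (rule bl_add[OF bop_bl])
lemma bop_app_diff: "bop T \<Longrightarrow> T (x - y) = T x - T y"
  by (rule bl_diff[OF bop_bl])
lemma bop_app_minus: "bop T \<Longrightarrow> T (- x) = - T x"
  by (rule bl_minus[OF bop_bl])
lemma bop_app_zero: "bop T \<Longrightarrow> T 0 = 0"
  by (rule bl_zero[OF bop_bl])

lemmas bop_lin = bop_app_add bop_app_diff bop_app_minus bop_app_zero bop_scaleC

lemma ortho_closure:
  assumes D: "positive_op D" and k: "D k = 0" and m: "m \<in> closure (range D)"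
  shows "cinner m k = 0"
proof -
  have cl: "closed {m. cinner m k = 0}"
    by (rule closed_Collect_eq[OF linear_continuous_on[OF bounded_bilinear.bounded_linear_left[OF bounded_bilinear_cinner]] continuous_on_const])
  have "range D \<subseteq> {m. cinner m k = 0}"
    using pos_selfadj[OF D] k by auto
  then have "closure (range D) \<subseteq> {m. cinner m k = 0}"
    using cl by (rule closure_minimal)
  then show ?thesis using m by auto
qed

lemma eq_on_closure:
  assumes f: "bounded_linear f" and g: "bounded_linear g"
    and e: "\<And>w. f (E w) = g (E w)" and x: "x \<in> closure (range E)"
  shows "f x = g x"
proof -
  have cl: "closed {x. f x = g x}"
    by (rule closed_Collect_eq[OF linear_continuous_on[OF f] linear_continuous_on[OF g]])
  have "range E \<subseteq> {x. f x = g x}" using e by auto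
  then have "closure (range E) \<subseteq> {x. f x = g x}" using cl by (rule closure_minimal)
  then show ?thesis using x by auto
qed

lemma gamma_P:
  assumes gc: "gamma_contraction n S P" and n: "n \<ge> 1"
  shows "bop P \<and> (\<forall>x. norm (P x) \<le> norm x)"
proof -
  have gn: "gtuple n S P n = P" by (simp add: gtuple_def)
  have bP: "bop P" using gc n gn unfolding gamma_contraction_def by (metis atLeastAtMost_iff order_refl)
  have "pvars (PVar n) \<subseteq> {1..n}" using n by simp
  then have on: "onorm P \<le> (SUP v\<in>gamma_set n. cmod (peval v (PVar n)))"
    using gc gn unfolding gamma_contraction_def by (metis opeval.simps(2))
  have ne: "gamma_set n \<noteq> {}"
  proof -
    define z0 :: "nat \<Rightarrow> complex" where "z0 = (\<lambda>_. 0)"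
    define v where "v = (\<lambda>j. if j \<in> {1..n-1} then esym n j z0 else if j = n then (\<Prod>j\<in>{1..n}. z0 j) else 0)"
    have "v \<in> gamma_set n"
      unfolding gamma_set_def
      by (rule CollectI, rule exI[of _ z0]) (use n in \<open>auto simp: v_def z0_def\<close>)
    then show ?thesis by blast
  qed
  have "(SUP v\<in>gamma_set n. cmod (peval v (PVar n))) \<le> 1"
  proof (rule cSUP_least[OF ne])
    fix v assume "v \<in> gamma_set n"
    then obtain zz where zz: "\<forall>j\<in>{1..n}. cmod (zz j) \<le> 1" "v n = (\<Prod>j\<in>{1..n}. zz j)"
      unfolding gamma_set_def by blast
    have "cmod (v n) = (\<Prod>j\<in>{1..n}. cmod (zz j))" by (simp add: zz(2) prod_norm)
    also have "\<dots> \<le> 1" by (rule prod_le_1) (use zz(1) in auto)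
    finally show "cmod (peval v (PVar n)) \<le> 1" by simp
  qed
  with on have o1: "onorm P \<le> 1" by simp
  have "norm (P x) \<le> norm x" for x
  proof -
    have "norm (P x) \<le> onorm P * norm x" by (rule onorm[OF bop_bl[OF bP]])
    also have "\<dots> \<le> 1 * norm x" using o1 by (intro mult_right_mono) auto
    finally show ?thesis by simp
  qed
  with bP show ?thesis by blast
qed

lemma gamma_S:
  assumes gc: "gamma_contraction n S P" and j: "j \<in> {1..n-1}"
  shows "bop (S j) \<and> (\<forall>x. S j (P x) = P (S j x))"
proof -
  have jn: "j \<noteq> n" "j \<in> {1..n}" "n \<in> {1..n}" using j by auto
  have g1: "gtuple n S P j = S j" and g2: "gtuple n S P n = P" using jn by (auto simp: gtuple_def)
  have "bop (S j)" using gc jn g1 unfolding gamma_contraction_def by metis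
  moreover have "S j \<circ> P = P \<circ> S j" using gc jn g1 g2 unfolding gamma_contraction_def by metis
  ultimately show ?thesis by (metis comp_apply)
qed

theorem mainTheorem18:
  fixes n :: nat
    and S :: "nat \<Rightarrow> 'a::chilbert \<Rightarrow> 'a" and P :: "'a \<Rightarrow> 'a"
    and A B :: "nat \<Rightarrow> 'a \<Rightarrow> 'a"
  assumes "gamma_contraction n S P"
    and "fundamental_tuple n S P A"
    and "fundamental_tuple n (\<lambda>i. adj (S i)) (adj P) B"
  shows "\<forall>i\<in>{1..n-1}. \<forall>z. cmod z < 1 \<longrightarrow> (\<forall>x\<in>defect_space (adj P).
           adj (A i) (char_fn (adj P) z x) + scaleC z (A (n - i) (char_fn (adj P) z x))
         = char_fn (adj P) z (B i x + scaleC z (adj (B (n - i)) x)))"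
proof (intro ballI allI impI)
  note gc = assms(1) and hA = assms(2) and hB = assms(3)
  fix i z x
  assume i: "i \<in> {1..n-1}" and z: "cmod z < 1" and x: "x \<in> defect_space (adj P)"
  define j where "j = n - i"
  have n1: "n \<ge> 1" and j: "j \<in> {1..n-1}" and nj: "n - j = i" using i by (auto simp: j_def)
  have bP: "bop P" and cP: "\<And>y. norm (P y) \<le> norm y" using gamma_P[OF gc n1] by auto
  have bSi: "bop (S i)" and cSi: "\<And>y. S i (P y) = P (S i y)" using gamma_S[OF gc i] by auto
  have bSj: "bop (S j)" and cSj: "\<And>y. S j (P y) = P (S j y)" using gamma_S[OF gc j] by auto
  define Ps where "Ps = adj P"
  have bPs: "bop Ps" unfolding Ps_def by (rule adj_bop[OF bP])
  have cPs: "\<And>y. norm (Ps y) \<le> norm y" unfolding Ps_def by (rule adj_contr[OF bP cP])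
  have adjPs: "adj Ps = P" unfolding Ps_def by (rule adj_adj[OF bP])
  define D where "D = defect P"
  define E where "E = defect (adj P)"
  have QD: "contr (\<lambda>y. Ps (P y))" "bop (\<lambda>y. Ps (P y))" "selfadj (\<lambda>y. Ps (P y))"
    unfolding Ps_def by (rule QQ_props[OF bP cP])+
  have QE: "contr (\<lambda>y. P (Ps y))" "bop (\<lambda>y. P (Ps y))" "selfadj (\<lambda>y. P (Ps y))"
    using QQ_props[OF bPs cPs] by (simp_all add: adjPs)
  have Deq: "D = sq (\<lambda>y. Ps (P y))" unfolding D_def Ps_def by (rule defect_eq[OF bP cP])
  have Eeq: "E = sq (\<lambda>y. P (Ps y))" unfolding E_def Ps_def by (rule defect_adj_eq[OF bP cP])
  have pD: "positive_op D" unfolding Deq by (rule sq_positive[OF QD])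
  have pE: "positive_op E" unfolding Eeq by (rule sq_positive[OF QE])
  have bD: "bop D" and bE: "bop E" using pD pE by (auto simp: positive_op_def)
  have DD: "\<And>y. D (D y) = y - Ps (P y)" unfolding Deq by (rule sq_sq[OF QD(1)])
  have EE: "\<And>y. E (E y) = y - P (Ps y)" unfolding Eeq by (rule sq_sq[OF QE(1)])
  have PD: "\<And>y. P (D y) = E (P y)" unfolding Deq Eeq
    by (rule sq_comm[OF QD(1) QE(1) bop_bl[OF bP]]) simp
  have PsE: "\<And>y. Ps (E y) = D (Ps y)" unfolding Deq Eeq
    by (rule sq_comm[OF QE(1) QD(1) bop_bl[OF bPs]]) simp
  have adjD: "adj D = D" by (rule adj_unique[OF bD]) (rule pos_selfadj[OF pD])
  have adjE: "adj E = E" by (rule adj_unique[OF bE]) (rule pos_selfadj[OF pE])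
  define T where "T y = scaleC z (P y)" for y
  have bT: "bop T" unfolding T_def by (rule bop_scaleC_op[OF bP])
  have cT: "norm (T y) \<le> cmod z * norm y" for y
    unfolding T_def norm_scaleC using cP[of y] by (intro mult_left_mono) auto
  define R where "R y = (\<Sum>k. (T ^^ k) y)" for y
  have neu: "op_inv (\<lambda>y. y - T y) = R \<and> bop R \<and> (\<forall>y. R (y - T y) = y) \<and> (\<forall>y. R y - T (R y) = y)"
    using neumann[OF bT cT _ z] unfolding R_def[abs_def] by simp
  have bR: "bop R" and RI: "\<And>y. R (y - T y) = y" and IR: "\<And>y. R y - T (R y) = y" using neu by auto
  define Th where "Th x = - Ps x + scaleC z (D (R (E x)))" for x
  have char: "char_fn (adj P) z = Th"
  proof
    fix y
    have "op_inv (\<lambda>y. y - scaleC z (adj (adj P) y)) = R"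
      using neu by (simp add: adj_adj[OF bP] T_def)
    then show "char_fn (adj P) z y = Th y"
      unfolding char_fn_def Th_def by (simp add: adj_adj[OF bP] D_def E_def Ps_def)
  qed
  have bTh: "bop Th"
  proof -
    have "bop (\<lambda>x. - Ps x + scaleC z (D (R (E x))))"
      by (rule bop_add[OF bop_minus[OF bPs] bop_scaleC_op[OF bop_comp[OF bD bop_comp[OF bR bE]]]])
    then show ?thesis by (simp add: Th_def[abs_def])
  qed
  have Ai: "A i \<in> ops_on (defect_space P)" and FAi: "(\<lambda>y. S i y - adj (S j) (P y)) = D \<circ> A i \<circ> D"
    using hA i unfolding fundamental_tuple_def D_def j_def by auto
  have Aj: "A j \<in> ops_on (defect_space P)" and FAj: "(\<lambda>y. S j y - adj (S i) (P y)) = D \<circ> A j \<circ> D"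
    using hA j nj unfolding fundamental_tuple_def D_def by auto
  have Bi: "B i \<in> ops_on (defect_space (adj P))"
    and FBi: "(\<lambda>y. adj (S i) y - adj (adj (S j)) (adj P y)) = E \<circ> B i \<circ> E"
    using hB i unfolding fundamental_tuple_def E_def j_def by auto
  have Bj: "B j \<in> ops_on (defect_space (adj P))"
    and FBj: "(\<lambda>y. adj (S j) y - adj (adj (S i)) (adj P y)) = E \<circ> B j \<circ> E"
    using hB j nj unfolding fundamental_tuple_def E_def by auto
  have bAi: "bop (A i)" and bAj: "bop (A j)" and bBi: "bop (B i)" and bBj: "bop (B j)"
    using Ai Aj Bi Bj by (auto simp: ops_on_def)
  define Sis where "Sis = adj (S i)"
  define Sjs where "Sjs = adj (S j)"
  have bSis: "bop Sis" unfolding Sis_def by (rule adj_bop[OF bSi])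
  have bSjs: "bop Sjs" unfolding Sjs_def by (rule adj_bop[OF bSj])
  have FAi': "D (A i (D y)) = S i y - Sjs (P y)" for y
    using FAi unfolding Sjs_def by (metis comp_apply)
  have FAj': "D (A j (D y)) = S j y - Sis (P y)" for y
    using FAj unfolding Sis_def by (metis comp_apply)
  have FBi': "E (B i (E y)) = Sis y - S j (Ps y)" for y
    using FBi unfolding Sis_def Ps_def adj_adj[OF bSj] by (metis comp_apply)
  have FBj': "E (B j (E y)) = Sjs y - S i (Ps y)" for y
    using FBj unfolding Sjs_def Ps_def adj_adj[OF bSi] by (metis comp_apply)
  have FAis: "D (adj (A i) (D y)) = Sis y - Ps (S j y)" for y
  proof -
    have "adj (\<lambda>y. D (A i (D y))) = adj (\<lambda>y. S i y - Sjs (P y))"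
      using FAi' by presburger
    moreover have "adj (\<lambda>y. D (A i (D y))) = (\<lambda>y. D (adj (A i) (D y)))"
      by (simp add: adj_comp[OF bD bop_comp[OF bAi bD]] adj_comp[OF bAi bD] adjD)
    moreover have "adj (\<lambda>y. S i y - Sjs (P y)) = (\<lambda>y. Sis y - Ps (S j y))"
    proof -
      have "adj (\<lambda>y. S i y - Sjs (P y)) = (\<lambda>y. adj (S i) y - adj (\<lambda>y. Sjs (P y)) y)"
        by (rule adj_diff[OF bSi bop_comp[OF bSjs bP]])
      also have "\<dots> = (\<lambda>y. Sis y - Ps (S j y))"
        by (simp only: adj_comp[OF bSjs bP]) (simp add: Sjs_def adj_adj[OF bSj] Sis_def Ps_def)
      finally show ?thesis .
    qed
    ultimately show ?thesis by metis
  qed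
  have FBjs: "E (adj (B j) (E y)) = S j y - P (Sis y)" for y
  proof -
    have "adj (\<lambda>y. E (B j (E y))) = adj (\<lambda>y. Sjs y - S i (Ps y))"
      using FBj' by presburger
    moreover have "adj (\<lambda>y. E (B j (E y))) = (\<lambda>y. E (adj (B j) (E y)))"
      by (simp add: adj_comp[OF bE bop_comp[OF bBj bE]] adj_comp[OF bBj bE] adjE)
    moreover have "adj (\<lambda>y. Sjs y - S i (Ps y)) = (\<lambda>y. S j y - P (Sis y))"
    proof -
      have "adj (\<lambda>y. Sjs y - S i (Ps y)) = (\<lambda>y. adj Sjs y - adj (\<lambda>y. S i (Ps y)) y)"
        by (rule adj_diff[OF bSjs bop_comp[OF bSi bPs]])
      also have "\<dots> = (\<lambda>y. S j y - P (Sis y))"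
        by (simp only: adj_comp[OF bSi bPs]) (simp add: Sjs_def adj_adj[OF bSj] Sis_def adjPs)
      finally show ?thesis .
    qed
    ultimately show ?thesis by metis
  qed
  have cSis: "Sis (Ps y) = Ps (Sis y)" for y
  proof -
    have "adj (\<lambda>y. S i (P y)) = adj (\<lambda>y. P (S i y))" using cSi by presburger
    then have "(\<lambda>y. Ps (Sis y)) = (\<lambda>y. Sis (Ps y))"
      by (simp add: adj_comp[OF bSi bP] adj_comp[OF bP bSi] Sis_def Ps_def)
    then show ?thesis by metis
  qed
  have RSj: "R (S j y) = S j (R y)" for y
  proof -
    have "S j (R y) - T (S j (R y)) = S j (R y - T (R y))"
      by (simp add: bop_lin[OF bSj] T_def cSj)
    also have "\<dots> = S j y" by (simp add: IR)
    finally have "R (S j y) = R (S j (R y) - T (S j (R y)))" by simp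
    also have "\<dots> = S j (R y)" by (rule RI)
    finally show ?thesis .
  qed
  define f where "f x = adj (A i) (Th x) + scaleC z (A j (Th x))" for x
  define g where "g x = Th (B i x + scaleC z (adj (B j) x))" for x
  have bf: "bounded_linear f"
  proof -
    have "bop (\<lambda>x. adj (A i) (Th x) + scaleC z (A j (Th x)))"
      by (rule bop_add[OF bop_comp[OF adj_bop[OF bAi] bTh] bop_scaleC_op[OF bop_comp[OF bAj bTh]]])
    then show ?thesis by (simp add: f_def[abs_def] bop_bl)
  qed
  have bg: "bounded_linear g"
  proof -
    have "bop (\<lambda>x. Th (B i x + scaleC z (adj (B j) x)))"
      by (rule bop_comp[OF bTh bop_add[OF bBi bop_scaleC_op[OF adj_bop[OF bBj]]]])
    then show ?thesis by (simp add: g_def[abs_def] bop_bl)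
  qed
  have key: "f (E w) = g (E w)" for w
  proof -
    define vv where "vv = - Ps w + scaleC z (R (E (E w)))"
    have ThE: "Th (E w) = D vv"
      unfolding Th_def vv_def by (simp add: PsE bop_lin[OF bD])
    have vvT: "vv - T vv = scaleC z w - Ps w"
    proof -
      have "vv - T vv = - Ps w + T (Ps w) + scaleC z (R (E (E w)) - T (R (E (E w))))"
        unfolding vv_def T_def by (simp add: bop_lin[OF bP] scaleC_add_right scaleC_minus_right
            scaleC_diff_right scaleC_scaleC mult.commute)
      also have "\<dots> = - Ps w + T (Ps w) + scaleC z (w - P (Ps w))" by (simp add: IR EE)
      also have "\<dots> = scaleC z w - Ps w" unfolding T_def by (simp add: scaleC_diff_right)
      finally show ?thesis .
    qed
    have vvR: "vv = R (scaleC z w - Ps w)" using RI[of vv] vvT by simp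
    define u where "u = B i (E w) + scaleC z (adj (B j) (E w))"
    have Eu: "E u = (Sis w - T (Sis w)) + S j (scaleC z w - Ps w)"
    proof -
      have "E u = (Sis w - S j (Ps w)) + scaleC z (S j w - P (Sis w))"
        unfolding u_def by (simp add: bop_lin[OF bE] FBi' FBjs)
      also have "\<dots> = (Sis w - T (Sis w)) + S j (scaleC z w - Ps w)"
        unfolding T_def by (simp add: bop_lin[OF bSj] scaleC_diff_right algebra_simps)
      finally show ?thesis .
    qed
    define r where "r = R (E u)"
    have rr: "r = Sis w + S j vv"
      unfolding r_def Eu by (simp only: bop_app_add[OF bR] RI RSj vvR[symmetric])
    have Eur: "E u = r - T r" unfolding r_def by (simp add: IR)
    have DL: "D (f (E w)) = scaleC z (Sis w) - Sis (Ps w) + scaleC z (S j vv) - Ps (S j vv)"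
    proof -
      have "D (f (E w)) = (Sis vv - Ps (S j vv)) + scaleC z (S j vv - Sis (P vv))"
        unfolding f_def ThE by (simp add: bop_lin[OF bD] FAis FAj')
      also have "\<dots> = Sis (vv - T vv) + scaleC z (S j vv) - Ps (S j vv)"
        unfolding T_def by (simp add: bop_lin[OF bSis] scaleC_diff_right algebra_simps)
      also have "\<dots> = scaleC z (Sis w) - Sis (Ps w) + scaleC z (S j vv) - Ps (S j vv)"
        by (simp add: vvT bop_lin[OF bSis])
      finally show ?thesis .
    qed
    have DR: "D (g (E w)) = scaleC z (Sis w) - Ps (Sis w) + scaleC z (S j vv) - Ps (S j vv)"
    proof -
      have "g (E w) = - Ps u + scaleC z (D r)" unfolding g_def Th_def u_def r_def by simp
      then have "D (g (E w)) = - Ps (E u) + scaleC z (r - Ps (P r))"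
        by (simp add: bop_lin[OF bD] DD PsE)
      also have "\<dots> = scaleC z r - Ps r"
        unfolding Eur T_def by (simp add: bop_lin[OF bPs] scaleC_diff_right)
      also have "\<dots> = scaleC z (Sis w) - Ps (Sis w) + scaleC z (S j vv) - Ps (S j vv)"
        unfolding rr by (simp add: bop_lin[OF bPs] scaleC_add_right)
      finally show ?thesis .
    qed
    define d where "d = f (E w) - g (E w)"
    have Dd: "D d = 0" unfolding d_def by (simp add: bop_lin[OF bD] DL DR cSis)
    have orth: "cinner d k = 0" if k: "D k = 0" for k
    proof -
      have kM: "\<And>m. m \<in> defect_space P \<Longrightarrow> cinner m k = 0"
        unfolding defect_space_def D_def[symmetric] using ortho_closure[OF pD k] by blast
      have Aik: "A i k = 0" using Ai kM by (simp add: ops_on_def)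
      have DvvM: "D vv \<in> defect_space P" unfolding defect_space_def D_def[symmetric]
        by (rule subsetD[OF closure_subset]) simp
      have "A j (D vv) \<in> defect_space P" using Aj DvvM by (auto simp: ops_on_def)
      then have c2: "cinner (A j (D vv)) k = 0" by (rule kM)
      have c1: "cinner (adj (A i) (D vv)) k = 0" by (simp add: adj_char'[OF bAi] Aik)
      have EPk: "E (P k) = 0" using PD[of k] k by (simp add: bop_lin[OF bP])
      have kE: "\<And>m. m \<in> defect_space (adj P) \<Longrightarrow> cinner m (P k) = 0"
        unfolding defect_space_def E_def[symmetric] using ortho_closure[OF pE EPk] by blast
      have Bjk: "B j (P k) = 0" using Bj kE by (simp add: ops_on_def)
      have EwM: "E w \<in> defect_space (adj P)" unfolding defect_space_def E_def[symmetric]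
        by (rule subsetD[OF closure_subset]) simp
      have "B i (E w) \<in> defect_space (adj P)" using Bi EwM by (auto simp: ops_on_def)
      then have c3: "cinner (B i (E w)) (P k) = 0" by (rule kE)
      have c4: "cinner (adj (B j) (E w)) (P k) = 0" by (simp add: adj_char'[OF bBj] Bjk)
      have c5: "cinner (Ps u) k = 0"
        unfolding u_def Ps_def by (simp add: adj_char'[OF bP] cinner_add_left cinner_scaleC_left c3 c4)
      have c6: "cinner (D r) k = 0" by (simp add: pos_selfadj[OF pD] k)
      have "g (E w) = - Ps u + scaleC z (D r)" unfolding g_def Th_def u_def r_def by simp
      then show ?thesis
        unfolding d_def f_def ThE
        by (simp add: cinner_diff_left cinner_add_left cinner_scaleC_left cinner_minus_left c1 c2 c5 c6)
    qed
    have "cinner d d = 0" by (rule orth[OF Dd])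
    then show ?thesis by (simp add: cinner_self_eq_0 d_def)
  qed
  have xE: "x \<in> closure (range E)" using x by (simp add: defect_space_def E_def)
  have "f x = g x" by (rule eq_on_closure[OF bf bg key xE])
  then show "adj (A i) (char_fn (adj P) z x) + scaleC z (A (n - i) (char_fn (adj P) z x))
         = char_fn (adj P) z (B i x + scaleC z (adj (B (n - i)) x))"
    by (simp add: char f_def g_def j_def)
qed


end
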